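(* For every $\alpha \in (0,\tfrac{1}{2})$ there is a (deterministic, non-clairvoyant) online algorithm for dynamic bin packing that makes at most $\frac{4\alpha}{1-2\alpha}\cdot n$ migrations in total on every instance with $n$ items, and such that at every time $t$ the number of bins it has open is at most $\frac{1}{\alpha}\mathrm{OPT}_t + O(\log \rho)$, where $\rho$ is the maximum number of items simultaneously present in the system at any time (the $O(\cdot)$ hides an absolute constant).
   Context: Dynamic bin packing: bins have capacity $1$. Items $i=1,\dots,n$ arrive online at arrival times $a_i\ge 0$, with size $s_i\in[0,1]$ and duration $d_i>0$; item $i$ is present in the system during $[a_i,a_i+d_i)$. The algorithm is non-clairvoyant: at arrival only $s_i$ is revealed, not $d_i$. Upon arrival the algorithm must place the item into an open bin whose current load (total size of the items it contains) plus $s_i$ is at most $1$, or open a new bin for it. A migration moves an already placed item from its bin to another bin (respecting capacity); the number of migrations is the total number of such moves. A bin is open while it contains at least one item. $\mathrm{OPT}_t$ denotes the minimum number of unit-capacity bins needed to pack the items present in the system at time $t$. *)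

theory Defs
  imports Complex_Main "HOL-Library.Product_Lexorder"
begin

type_synonym item = "real \<times> real \<times> real"

definition arr :: "item \<Rightarrow> real" where "arr x = fst x"
definition isize :: "item \<Rightarrow> real" where "isize x = fst (snd x)"
definition dur :: "item \<Rightarrow> real" where "dur x = snd (snd x)"

definition well_formed :: "item list \<Rightarrow> bool" where
  "well_formed I \<longleftrightarrow> (\<forall>x\<in>set I. 0 \<le> arr x \<and> 0 \<le> isize x \<and> isize x \<le> 1 \<and> 0 < dur x)"

definition present_at :: "item list \<Rightarrow> real \<Rightarrow> nat set" where
  "present_at I t = {i. i < length I \<and> arr (I!i) \<le> t \<and> t < arr (I!i) + dur (I!i)}"

definition feasible :: "item list \<Rightarrow> nat set \<Rightarrow> (nat \<Rightarrow> nat) \<Rightarrow> bool" where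
  "feasible I P c \<longleftrightarrow> (\<forall>b. (\<Sum>i\<in>{i\<in>P. c i = b}. isize (I!i)) \<le> 1)"

definition opt :: "item list \<Rightarrow> nat set \<Rightarrow> nat" where
  "opt I P = (LEAST k. \<exists>c::nat \<Rightarrow> nat. (\<forall>i\<in>P. c i < k) \<and> feasible I P c)"

definition rho :: "item list \<Rightarrow> nat" where
  "rho I = Max (range (\<lambda>t. card (present_at I t)))"

text \<open>Events as seen by a non-clairvoyant algorithm: "Arr t i s" (item i of size s
  arrives at time t) and "Dep t i" (item i departs at time t). Durations are never revealed.\<close>
datatype event = Arr real nat real | Dep real nat

fun ev_time :: "event \<Rightarrow> real" where
  "ev_time (Arr t _ _) = t"
| "ev_time (Dep t _) = t"

text \<open>Event sequence of an instance: sorted by time; at equal times departures before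
  arrivals (an item is absent at its departure time); remaining ties by item index.\<close>
definition events :: "item list \<Rightarrow> event list" where
  "events I = map snd (sort_key fst
     ([((arr (I!i) + dur (I!i), 0::nat, i), Dep (arr (I!i) + dur (I!i)) i). i \<leftarrow> [0..<length I]] @
      [((arr (I!i), 1::nat, i), Arr (arr (I!i)) i (isize (I!i))). i \<leftarrow> [0..<length I]]))"

definition present :: "event list \<Rightarrow> nat set" where
  "present h = {i. (\<exists>t s. Arr t i s \<in> set h) \<and> (\<forall>t. Dep t i \<notin> set h)}"

text \<open>A deterministic online algorithm maps the history of events observed so far to its
  response to the last event: a nonempty list of successive configurations (bin labels of
  items). The first configuration is the packing right after the event (placing an arriving
  item); each subsequent one performs one migration. The final one is the state after the event.\<close>
type_synonym algorithm = "event list \<Rightarrow> (nat \<Rightarrow> nat) list"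

definition trace :: "algorithm \<Rightarrow> item list \<Rightarrow> (nat \<times> (nat \<Rightarrow> nat)) list" where
  "trace A I = concat (map (\<lambda>k. map (\<lambda>c. (k, c)) (A (take k (events I))))
                           [1..<Suc (length (events I))])"

definition moved :: "item list \<Rightarrow> nat \<times> (nat \<Rightarrow> nat) \<Rightarrow> nat \<times> (nat \<Rightarrow> nat) \<Rightarrow> nat set" where
  "moved I x y = {i \<in> present (take (fst x) (events I)) \<inter> present (take (fst y) (events I)).
                    snd x i \<noteq> snd y i}"

definition valid_run :: "algorithm \<Rightarrow> item list \<Rightarrow> bool" where
  "valid_run A I \<longleftrightarrow>
     (\<forall>k\<in>{1..length (events I)}. A (take k (events I)) \<noteq> []) \<and>
     (\<forall>x\<in>set (trace A I). feasible I (present (take (fst x) (events I))) (snd x)) \<and>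
     (\<forall>j. Suc j < length (trace A I) \<longrightarrow>
        (if fst (trace A I ! j) = fst (trace A I ! Suc j)
         then card (moved I (trace A I ! j) (trace A I ! Suc j)) \<le> 1
         else moved I (trace A I ! j) (trace A I ! Suc j) = {}))"

definition migrations :: "algorithm \<Rightarrow> item list \<Rightarrow> nat" where
  "migrations A I = (\<Sum>j<length (trace A I) - 1. card (moved I (trace A I ! j) (trace A I ! Suc j)))"

definition hist_at :: "item list \<Rightarrow> real \<Rightarrow> event list" where
  "hist_at I t = takeWhile (\<lambda>e. ev_time e \<le> t) (events I)"

definition open_bins_at :: "algorithm \<Rightarrow> item list \<Rightarrow> real \<Rightarrow> nat" where
  "open_bins_at A I t = card (last (A (hist_at I t)) ` present (hist_at I t))"

end

theory Submission
  imports Defs "HOL-Library.Multiset" "HOL-Library.Nat_Bijection"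
begin

fun kappa :: "event \<Rightarrow> real \<times> nat \<times> nat" where
  "kappa (Dep t i) = (t, 0, i)"
| "kappa (Arr t i s) = (t, 1, i)"

definition EL :: "item list \<Rightarrow> event list" where
  "EL I = map (\<lambda>i. Dep (arr (I!i) + dur (I!i)) i) [0..<length I] @
          map (\<lambda>i. Arr (arr (I!i)) i (isize (I!i))) [0..<length I]"

lemma events_alt: "events I = map snd (sort_key fst (map (\<lambda>e. (kappa e, e)) (EL I)))"
  unfolding events_def EL_def by (simp add: comp_def)

lemma mset_events: "mset (events I) = mset (EL I)"
proof -
  have "mset (events I) = image_mset snd (mset (sort_key fst (map (\<lambda>e. (kappa e, e)) (EL I))))"
    unfolding events_alt by (rule mset_map)
  also have "\<dots> = image_mset snd (mset (map (\<lambda>e. (kappa e, e)) (EL I)))" by simp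
  also have "\<dots> = mset (EL I)" by (simp add: multiset.map_comp comp_def)
  finally show ?thesis .
qed

lemma set_events: "set (events I) = set (EL I)"
  by (metis mset_events set_mset_mset)

lemma length_events: "length (events I) = 2 * length I"
proof -
  have "length (events I) = size (mset (events I))" by simp
  also have "\<dots> = size (mset (EL I))" by (simp only: mset_events)
  also have "\<dots> = 2 * length I" by (simp add: EL_def)
  finally show ?thesis .
qed

lemma map_kappa_events: "map kappa (events I) = map fst (sort_key fst (map (\<lambda>e. (kappa e, e)) (EL I)))"
proof -
  have "\<forall>p\<in>set (sort_key fst (map (\<lambda>e. (kappa e, e)) (EL I))). kappa (snd p) = fst p"
    by auto
  then show ?thesis unfolding events_alt by (simp add: map_eq_conv)
qed

lemma distinct_kappa_EL: "distinct (map kappa (EL I))"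
  unfolding EL_def by (auto simp: distinct_map inj_on_def)

lemma mset_kappa: "mset (map kappa (events I)) = mset (map kappa (EL I))"
  by (simp add: mset_events)

lemma sorted_kappa: "sorted_wrt (<) (map kappa (events I))"
proof -
  have "sorted (map kappa (events I))" unfolding map_kappa_events by simp
  moreover have "distinct (map kappa (events I))"
    by (metis distinct_kappa_EL mset_kappa mset_eq_imp_distinct_iff)
  ultimately show ?thesis by (simp add: strict_sorted_iff)
qed

lemma sorted_less_nth_iff:
  fixes f :: "'a \<Rightarrow> 'b::linorder"
  assumes "sorted_wrt (<) (map f xs)" "p < length xs" "q < length xs"
  shows "f (xs!q) < f (xs!p) \<longleftrightarrow> q < p"
proof
  assume "q < p" then show "f (xs!q) < f (xs!p)"
    using assms sorted_wrt_nth_less[of "(<)" "map f xs" q p] by auto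
next
  assume a: "f (xs!q) < f (xs!p)"
  show "q < p"
  proof (rule ccontr)
    assume "\<not> q < p"
    then have "p = q \<or> p < q" by auto
    then show False
    proof
      assume "p = q" then show False using a by simp
    next
      assume "p < q" then have "f (xs!p) < f (xs!q)"
        using assms sorted_wrt_nth_less[of "(<)" "map f xs" p q] by auto
      then show False using a by simp
    qed
  qed
qed

lemma in_take_iff:
  fixes f :: "'a \<Rightarrow> 'b::linorder"
  assumes "sorted_wrt (<) (map f xs)" "p < length xs"
  shows "e \<in> set (take p xs) \<longleftrightarrow> e \<in> set xs \<and> f e < f (xs!p)"
proof
  assume "e \<in> set (take p xs)"
  then obtain q where q: "q < length (take p xs)" "take p xs ! q = e" by (auto simp: in_set_conv_nth)
  then have "q < p" "xs!q = e" "q < length xs" by auto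
  then show "e \<in> set xs \<and> f e < f (xs!p)"
    using sorted_less_nth_iff[OF assms, of q] by auto
next
  assume "e \<in> set xs \<and> f e < f (xs!p)"
  then obtain q where q: "q < length xs" "xs!q = e" "f e < f (xs!p)" by (auto simp: in_set_conv_nth)
  then have "q < p" using sorted_less_nth_iff[OF assms, of q] by auto
  then show "e \<in> set (take p xs)" using q by (auto simp: in_set_conv_nth intro!: exI[of _ q])
qed

lemma mem_events: "e \<in> set (events I) \<longleftrightarrow>
   (\<exists>i<length I. e = Dep (arr (I!i) + dur (I!i)) i) \<or> (\<exists>i<length I. e = Arr (arr (I!i)) i (isize (I!i)))"
  unfolding set_events EL_def by auto

lemma Arr_in_events: "Arr t i s \<in> set (events I) \<longleftrightarrow> i < length I \<and> t = arr (I!i) \<and> s = isize (I!i)"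
  unfolding mem_events by auto

lemma Dep_in_events: "Dep t i \<in> set (events I) \<longleftrightarrow> i < length I \<and> t = arr (I!i) + dur (I!i)"
  unfolding mem_events by auto

lemma kappa_time: "kappa x < kappa y \<Longrightarrow> ev_time x \<le> ev_time y"
  by (cases x; cases y) (auto simp: less_prod_def)

lemma present_snoc_Dep: "present (h @ [Dep t i]) = present h - {i}"
  unfolding present_def by auto

lemma present_snoc_Arr: "(\<forall>t'. Dep t' i \<notin> set h) \<Longrightarrow> present (h @ [Arr t i s]) = insert i (present h)"
  unfolding present_def by auto

lemma take_Suc_nth: "k < length xs \<Longrightarrow> take (Suc k) xs = take k xs @ [xs!k]"
  by (simp add: take_Suc_conv_app_nth)

context
  fixes I :: "item list"
  assumes wf: "well_formed I"
begin

lemma dur_pos: "i < length I \<Longrightarrow> 0 < dur (I!i)"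
  using wf unfolding well_formed_def by auto

lemma size_bounds: "i < length I \<Longrightarrow> 0 \<le> isize (I!i) \<and> isize (I!i) \<le> 1"
  using wf unfolding well_formed_def by auto

lemma present_take_sub: "present (take k (events I)) \<subseteq> {..<length I}"
  unfolding present_def using Arr_in_events by (auto dest: in_set_takeD)

lemma arr_step:
  assumes p: "p < length (events I)" and e: "events I ! p = Arr t i s"
  shows "i < length I" "t = arr (I!i)" "s = isize (I!i)"
    "i \<notin> present (take p (events I))"
    "present (take (Suc p) (events I)) = insert i (present (take p (events I)))"
    "present (take (Suc p) (events I)) \<subseteq> present_at I t"
proof -
  have mem: "Arr t i s \<in> set (events I)" using p e nth_mem by metis
  then show i: "i < length I" and t: "t = arr (I!i)" and s: "s = isize (I!i)"
    using Arr_in_events by auto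
  have nodep: "\<forall>t'. Dep t' i \<notin> set (take (Suc p) (events I))"
  proof (intro allI notI)
    fix t' assume a: "Dep t' i \<in> set (take (Suc p) (events I))"
    then have d: "Dep t' i \<in> set (events I)" by (auto dest: in_set_takeD)
    then have t': "t' = arr (I!i) + dur (I!i)" using Dep_in_events by auto
    have "Dep t' i \<in> set (take p (events I))"
      using a e p by (simp add: take_Suc_nth)
    then have "kappa (Dep t' i) < kappa (Arr t i s)"
      using in_take_iff[OF sorted_kappa p] e by auto
    then show False using t t' dur_pos[OF i] by auto
  qed
  have noarr: "\<forall>t' s'. Arr t' i s' \<notin> set (take p (events I))"
  proof (intro allI notI)
    fix t' s' assume a: "Arr t' i s' \<in> set (take p (events I))"
    then have "Arr t' i s' \<in> set (events I)" by (auto dest: in_set_takeD)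
    then have "t' = t" "s' = s" using Arr_in_events t s by auto
    then show False using a in_take_iff[OF sorted_kappa p] e by auto
  qed
  then show "i \<notin> present (take p (events I))" unfolding present_def by auto
  show eq: "present (take (Suc p) (events I)) = insert i (present (take p (events I)))"
    using present_snoc_Arr[of i "take p (events I)" t s] nodep p e
    by (simp add: take_Suc_nth)
  show "present (take (Suc p) (events I)) \<subseteq> present_at I t"
  proof
    fix j assume jm: "j \<in> present (take (Suc p) (events I))"
    then obtain tj sj where aj: "Arr tj j sj \<in> set (take (Suc p) (events I))"
      and nd: "\<forall>t. Dep t j \<notin> set (take (Suc p) (events I))" unfolding present_def by auto
    have ajm: "Arr tj j sj \<in> set (events I)" using aj by (auto dest: in_set_takeD)
    then have j: "j < length I" and tj: "tj = arr (I!j)" using Arr_in_events by auto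
    have "tj \<le> t"
    proof (cases "Arr tj j sj = Arr t i s")
      case True then show ?thesis by simp
    next
      case False
      then have "Arr tj j sj \<in> set (take p (events I))" using aj p e by (auto simp: take_Suc_nth)
      then have "kappa (Arr tj j sj) < kappa (Arr t i s)" using in_take_iff[OF sorted_kappa p] e by auto
      then show ?thesis by (auto simp: less_prod_def)
    qed
    moreover have "t < arr (I!j) + dur (I!j)"
    proof -
      let ?d = "Dep (arr (I!j) + dur (I!j)) j"
      have dm: "?d \<in> set (events I)" using Dep_in_events j by auto
      have "?d \<notin> set (take p (events I))" using nd p e by (auto simp: take_Suc_nth)
      then have "\<not> kappa ?d < kappa (Arr t i s)" using in_take_iff[OF sorted_kappa p] e dm by auto
      then show ?thesis by (auto simp: less_prod_def)
    qed
    ultimately show "j \<in> present_at I t" unfolding present_at_def using j tj by auto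
  qed
qed

lemma dep_step:
  assumes p: "p < length (events I)" and e: "events I ! p = Dep t i"
  shows "i < length I" "i \<in> present (take p (events I))"
    "present (take (Suc p) (events I)) = present (take p (events I)) - {i}"
proof -
  have mem: "Dep t i \<in> set (events I)" using p e nth_mem by metis
  then have i: "i < length I" and t: "t = arr (I!i) + dur (I!i)"
    using Dep_in_events by auto
  then show "i < length I" by simp
  show "present (take (Suc p) (events I)) = present (take p (events I)) - {i}"
    using p e by (simp add: take_Suc_nth present_snoc_Dep)
  let ?a = "Arr (arr (I!i)) i (isize (I!i))"
  have am: "?a \<in> set (events I)" using Arr_in_events i by auto
  have "kappa ?a < kappa (Dep t i)" using t dur_pos[OF i] by (auto simp: less_prod_def)
  then have a1: "?a \<in> set (take p (events I))" using in_take_iff[OF sorted_kappa p] e am by auto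
  have "\<forall>t'. Dep t' i \<notin> set (take p (events I))"
  proof (intro allI notI)
    fix t' assume a: "Dep t' i \<in> set (take p (events I))"
    then have "Dep t' i \<in> set (events I)" by (auto dest: in_set_takeD)
    then have "t' = t" using Dep_in_events t by auto
    then show False using a in_take_iff[OF sorted_kappa p] e by auto
  qed
  then show "i \<in> present (take p (events I))" using a1 unfolding present_def by blast
qed

lemma sorted_time: "sorted (map ev_time (events I))"
proof -
  have "sorted_wrt (<) (map kappa (events I))" by (rule sorted_kappa)
  then have "sorted_wrt (\<lambda>x y. kappa x < kappa y) (events I)" by (simp add: sorted_wrt_map)
  then have "sorted_wrt (\<lambda>x y. ev_time x \<le> ev_time y) (events I)"
    by (rule sorted_wrt_mono_rel[rotated]) (rule kappa_time)
  then show ?thesis by (simp add: sorted_wrt_map)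
qed

lemma takeWhile_sorted_filter:
  "sorted (map f xs) \<Longrightarrow> takeWhile (\<lambda>e. f e \<le> t) xs = filter (\<lambda>e. f e \<le> t) xs"
proof (induction xs)
  case Nil then show ?case by simp
next
  case (Cons x xs)
  show ?case
  proof (cases "f x \<le> t")
    case True then show ?thesis using Cons by auto
  next
    case False
    then have "\<forall>y\<in>set xs. \<not> f y \<le> t" using Cons.prems by auto
    then show ?thesis using False by simp
  qed
qed

lemma hist_present: "present (hist_at I t) \<subseteq> present_at I t"
proof
  fix j assume jm: "j \<in> present (hist_at I t)"
  have hf: "hist_at I t = filter (\<lambda>e. ev_time e \<le> t) (events I)"
    unfolding hist_at_def by (rule takeWhile_sorted_filter[OF sorted_time])
  from jm obtain tj sj where aj: "Arr tj j sj \<in> set (hist_at I t)"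
    and nd: "\<forall>t'. Dep t' j \<notin> set (hist_at I t)" unfolding present_def by blast
  then have "Arr tj j sj \<in> set (events I)" "tj \<le> t" unfolding hf by auto
  then have j: "j < length I" and tj: "arr (I!j) \<le> t" using Arr_in_events by auto
  have "Dep (arr (I!j) + dur (I!j)) j \<in> set (events I)" using Dep_in_events j by auto
  then have "\<not> arr (I!j) + dur (I!j) \<le> t" using nd unfolding hf by auto
  then show "j \<in> present_at I t" unfolding present_at_def using j tj by auto
qed

lemma hist_take: "\<exists>k\<le>length (events I). hist_at I t = take k (events I)"
  unfolding hist_at_def by (metis takeWhile_eq_take length_takeWhile_le)

lemma dep_count: "length (filter (\<lambda>e. \<exists>t i. e = Dep t i) (events I)) = length I"
proof -
  have "length (filter (\<lambda>e. \<exists>t i. e = Dep t i) (events I)) = size (filter_mset (\<lambda>e. \<exists>t i. e = Dep t i) (mset (events I)))"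
    by (metis mset_filter size_mset)
  also have "\<dots> = length (filter (\<lambda>e. \<exists>t i. e = Dep t i) (EL I))"
    by (metis mset_events mset_filter size_mset)
  also have "\<dots> = length I" unfolding EL_def by (simp add: filter_map comp_def)
  finally show ?thesis .
qed

end

record st = cf :: "nat \<Rightarrow> nat" opn :: "nat \<Rightarrow> nat" szs :: "nat \<Rightarrow> real"
  rmx :: nat migs :: nat deps :: nat

definition cls :: "real \<Rightarrow> nat" where "cls s = (LEAST j. 1 / 2 ^ Suc j < s)"
definition ep :: "nat \<Rightarrow> nat" where "ep r = (LEAST e. r \<le> 2 ^ e)"
definition tlab :: "nat \<Rightarrow> nat" where "tlab e = 2 * e"
definition clab :: "nat \<Rightarrow> nat \<Rightarrow> nat" where "clab j k = Suc (2 * prod_encode (j, k))"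

definition ld :: "(nat \<Rightarrow> real) \<Rightarrow> (nat \<Rightarrow> nat) \<Rightarrow> nat set \<Rightarrow> nat \<Rightarrow> real" where
  "ld sz c P b = (\<Sum>i\<in>{i\<in>P. c i = b}. sz i)"

definition ins :: "(nat \<Rightarrow> real) \<Rightarrow> nat set \<Rightarrow> nat \<Rightarrow> (nat \<Rightarrow> nat) \<times> (nat \<Rightarrow> nat)
    \<Rightarrow> (nat \<Rightarrow> nat) \<times> (nat \<Rightarrow> nat)" where
  "ins sz P x co = (let c = fst co; q = snd co; j = cls (sz x) in
     if ld sz c (P - {x}) (clab j (q j)) + sz x \<le> 1 then (c(x := clab j (q j)), q)
     else (c(x := clab j (Suc (q j))), q(j := Suc (q j))))"

fun mvl :: "(nat \<Rightarrow> real) \<Rightarrow> nat set \<Rightarrow> nat list \<Rightarrow> (nat \<Rightarrow> nat) \<times> (nat \<Rightarrow> nat)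
    \<Rightarrow> ((nat \<Rightarrow> nat) \<times> (nat \<Rightarrow> nat)) list" where
  "mvl sz P [] co = []"
| "mvl sz P (x # xs) co = ins sz P x co # mvl sz P xs (ins sz P x co)"

definition step :: "real \<Rightarrow> nat set \<Rightarrow> st \<Rightarrow> event \<Rightarrow> st \<times> (nat \<Rightarrow> nat) list" where
  "step al Q s e = (case e of
     Arr t i z \<Rightarrow> (let sz' = (szs s)(i := z); r' = max (rmx s) (card Q); E = ep r' in
        if z \<le> 1 / 2 ^ E then (s\<lparr>cf := (cf s)(i := tlab E), szs := sz', rmx := r'\<rparr>, [(cf s)(i := tlab E)])
        else (let co = ins sz' Q i (cf s, opn s) in
              (s\<lparr>cf := fst co, opn := snd co, szs := sz', rmx := r'\<rparr>, [fst co])))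
   | Dep t i \<Rightarrow> (let b = cf s i; jk = prod_decode (b div 2) in
        if odd b \<and> snd jk < opn s (fst jk) \<and> ld (szs s) (cf s) Q b < al then
          (let xs = sorted_list_of_set {x\<in>Q. cf s x = b}; L = mvl (szs s) Q xs (cf s, opn s);
               co = last ((cf s, opn s) # L) in
           (s\<lparr>cf := fst co, opn := snd co, migs := migs s + length xs, deps := Suc (deps s)\<rparr>,
            cf s # map fst L))
        else (s\<lparr>deps := Suc (deps s)\<rparr>, [cf s])))"

definition st0 :: st where
  "st0 = \<lparr>cf = (\<lambda>_. 0), opn = (\<lambda>_. 0), szs = (\<lambda>_. 0), rmx = 0, migs = 0, deps = 0\<rparr>"

fun runr :: "real \<Rightarrow> event list \<Rightarrow> st" where
  "runr al [] = st0"
| "runr al (e # r) = fst (step al (present (rev (e # r))) (runr al r) e)"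

definition alg :: "real \<Rightarrow> algorithm" where
  "alg al h = (case rev h of [] \<Rightarrow> [cf st0] | e # r \<Rightarrow> snd (step al (present h) (runr al r) e))"

definition adj :: "('a \<Rightarrow> 'a \<Rightarrow> bool) \<Rightarrow> 'a list \<Rightarrow> bool" where
  "adj R xs \<longleftrightarrow> (\<forall>j. Suc j < length xs \<longrightarrow> R (xs!j) (xs!Suc j))"

lemma adj_Nil[simp]: "adj R []" and adj_single[simp]: "adj R [x]"
  unfolding adj_def by auto

lemma adj_Cons2[simp]: "adj R (x # y # zs) \<longleftrightarrow> R x y \<and> adj R (y # zs)"
proof
  assume a: "adj R (x # y # zs)"
  have "R x y" using a[unfolded adj_def, rule_format, of 0] by simp
  moreover have "adj R (y # zs)" unfolding adj_def
  proof (intro allI impI)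
    fix j assume "Suc j < length (y # zs)"
    then show "R ((y # zs) ! j) ((y # zs) ! Suc j)"
      using a[unfolded adj_def, rule_format, of "Suc j"] by simp
  qed
  ultimately show "R x y \<and> adj R (y # zs)" ..
next
  assume a: "R x y \<and> adj R (y # zs)"
  show "adj R (x # y # zs)" unfolding adj_def
  proof (intro allI impI)
    fix j assume j: "Suc j < length (x # y # zs)"
    show "R ((x # y # zs) ! j) ((x # y # zs) ! Suc j)"
    proof (cases j)
      case 0 then show ?thesis using a by simp
    next
      case (Suc m) then show ?thesis using a j unfolding adj_def by auto
    qed
  qed
qed

lemma adj_append: "xs \<noteq> [] \<Longrightarrow> ys \<noteq> [] \<Longrightarrow>
   adj R (xs @ ys) \<longleftrightarrow> adj R xs \<and> adj R ys \<and> R (last xs) (hd ys)"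
proof (induction xs rule: induct_list012)
  case 1 then show ?case by simp
next
  case (2 x) then show ?case by (cases ys) auto
next
  case (3 x y zs) then show ?case by auto
qed

lemma cls_ex: "0 < s \<Longrightarrow> \<exists>j. 1 / 2 ^ Suc j < (s::real)"
proof -
  assume s: "0 < s"
  obtain n where n: "(1/2::real) ^ n < s" using real_arch_pow_inv[OF s, of "1/2"] by auto
  have "1 / 2 ^ Suc n \<le> (1/2::real) ^ n" by (simp add: power_divide field_simps)
  then show ?thesis using n by (intro exI[of _ n]) linarith
qed

lemma cls_lower: "0 < s \<Longrightarrow> 1 / 2 ^ Suc (cls s) < s"
  unfolding cls_def using cls_ex by (rule LeastI_ex)

lemma cls_upper: assumes "0 < s" "s \<le> 1" shows "s \<le> 1 / 2 ^ cls s"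
proof (cases "cls s")
  case 0 then show ?thesis using assms by simp
next
  case (Suc m)
  then have "m < cls s" by simp
  then have "\<not> 1 / 2 ^ Suc m < s" unfolding cls_def by (rule not_less_Least)
  then show ?thesis using Suc by simp
qed

lemma cls_lt: assumes "1 / 2 ^ E < s" "s \<le> 1" shows "cls s < E"
proof (cases E)
  case 0 then show ?thesis using assms by simp
next
  case (Suc m)
  then have "cls s \<le> m" unfolding cls_def using assms by (intro Least_le) simp
  then show ?thesis using Suc by simp
qed

lemma ep_ge: "r \<le> 2 ^ ep r"
proof -
  have "r \<le> 2 ^ r" by (simp add: less_imp_le)
  then show ?thesis unfolding ep_def by (rule LeastI)
qed

lemma ep_mono: "r \<le> r' \<Longrightarrow> ep r \<le> ep r'"
  unfolding ep_def by (rule Least_le) (metis ep_def ep_ge le_trans)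

lemma ep_Suc: "ep r = Suc m \<Longrightarrow> 2 ^ m < r"
proof -
  assume a: "ep r = Suc m"
  then have "m < ep r" by simp
  then have "\<not> r \<le> 2 ^ m" unfolding ep_def by (rule not_less_Least)
  then show ?thesis by simp
qed

lemma tlab_inj[simp]: "tlab a = tlab b \<longleftrightarrow> a = b" unfolding tlab_def by auto
lemma clab_inj[simp]: "clab j k = clab j' k' \<longleftrightarrow> j = j' \<and> k = k'"
  unfolding clab_def by (auto dest: prod_encode_eq[THEN iffD1])
lemma tlab_clab[simp]: "tlab e \<noteq> clab j k" "clab j k \<noteq> tlab e"
  unfolding tlab_def clab_def by presburger+
lemma odd_clab[simp]: "odd (clab j k)" unfolding clab_def by simp
lemma even_tlab[simp]: "\<not> odd (tlab e)" unfolding tlab_def by simp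
lemma clab_dec[simp]: "prod_decode (clab j k div 2) = (j, k)"
  unfolding clab_def by simp
lemma odd_is_clab: "odd b \<Longrightarrow> b = clab (fst (prod_decode (b div 2))) (snd (prod_decode (b div 2)))"
  unfolding clab_def by (simp add: prod_encode_prod_decode_aux)
lemma even_is_tlab: "\<not> odd b \<Longrightarrow> b = tlab (b div 2)"
  unfolding tlab_def by simp

lemma ld_upd_other: "b \<noteq> t \<Longrightarrow> ld sz (c(x := t)) P b = ld sz c (P - {x}) b"
  unfolding ld_def by (rule sum.cong) auto

lemma ld_remove_other: "c x \<noteq> b \<Longrightarrow> ld sz c (P - {x}) b = ld sz c P b"
  unfolding ld_def by (rule sum.cong) auto

lemma ld_upd_sz: "x \<notin> P \<Longrightarrow> ld (sz(x := z)) c P b = ld sz c P b"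
  unfolding ld_def by (rule sum.cong) auto

lemma ld_nonneg: "(\<And>i. i \<in> P \<Longrightarrow> 0 \<le> sz i) \<Longrightarrow> 0 \<le> ld sz c P b"
  unfolding ld_def by (rule sum_nonneg) auto

lemma ld_upd_target: assumes "finite P" "x \<in> P"
  shows "ld sz (c(x := t)) P t = ld sz c (P - {x}) t + sz x"
proof -
  have "{i\<in>P. (c(x := t)) i = t} = insert x {i\<in>P - {x}. c i = t}" using assms by auto
  then show ?thesis unfolding ld_def using assms by (simp add: add.commute)
qed

lemma ld_cong: "(\<And>i. i \<in> P \<Longrightarrow> (c' i = b) = (c i = b)) \<Longrightarrow> ld sz c' P b = ld sz c P b"
  unfolding ld_def by (rule sum.cong) auto

lemma ld_mono: assumes "P \<subseteq> P'" "finite P'" "\<And>i. i \<in> P' \<Longrightarrow> 0 \<le> sz i"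
  shows "ld sz c P b \<le> ld sz c P' b"
  unfolding ld_def using assms by (intro sum_mono2) auto

lemma ld_empty: "(\<And>i. i \<in> P \<Longrightarrow> c i \<noteq> b) \<Longrightarrow> ld sz c P b = 0"
  unfolding ld_def by (rule sum.neutral) auto

lemma ld_ge_member: assumes "finite P" "y \<in> P" "c y = b" "\<And>i. i \<in> P \<Longrightarrow> 0 \<le> sz i"
  shows "sz y \<le> ld sz c P b"
  unfolding ld_def using assms by (intro member_le_sum) auto

lemma ld_pos_ex: assumes "0 < ld sz c P b" shows "\<exists>y\<in>P. c y = b"
proof (rule ccontr)
  assume "\<not> ?thesis" then have "ld sz c P b = 0" by (intro ld_empty) auto
  then show False using assms by simp
qed

lemma ins_props:
  fixes sz :: "nat \<Rightarrow> real" and x :: nat and P :: "nat set" and c q :: "nat \<Rightarrow> nat"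
  defines "j \<equiv> cls (sz x)"
  assumes fin: "finite P" and x: "x \<in> P" and sx: "0 < sz x" "sz x \<le> 1"
    and feas: "\<forall>b. ld sz c (P - {x}) b \<le> 1"
    and lab: "\<forall>i\<in>P - {x}. \<forall>j' k'. c i = clab j' k' \<longrightarrow> k' \<le> q j'"
    and low: "\<forall>i\<in>P - {x}. \<forall>j' k'. c i = clab j' k' \<longrightarrow> 1 / 2 ^ Suc j' < sz i"
    and nn: "\<forall>i\<in>P. 0 \<le> sz i"
  shows "fst (ins sz P x (c, q)) = c(x := clab j (snd (ins sz P x (c, q)) j))"
    and "q j \<le> snd (ins sz P x (c, q)) j"
    and "snd (ins sz P x (c, q)) = q \<or>
         (snd (ins sz P x (c, q)) = q(j := Suc (q j)) \<and> 1/2 \<le> ld sz (fst (ins sz P x (c, q))) P (clab j (q j)))"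
    and "\<forall>b. ld sz (fst (ins sz P x (c, q))) P b \<le> 1"
proof -
  let ?L = "ld sz c (P - {x}) (clab j (q j))"
  have up: "sz x \<le> 1 / 2 ^ j" unfolding j_def using cls_upper sx by auto
  have nn': "\<And>i. i \<in> P - {x} \<Longrightarrow> 0 \<le> sz i" using nn by auto
  have P'fin: "finite (P - {x})" using fin by auto
  have G: "fst (ins sz P x (c, q)) = c(x := clab j (snd (ins sz P x (c, q)) j)) \<and>
    q j \<le> snd (ins sz P x (c, q)) j \<and>
    (snd (ins sz P x (c, q)) = q \<or>
         (snd (ins sz P x (c, q)) = q(j := Suc (q j)) \<and> 1/2 \<le> ld sz (fst (ins sz P x (c, q))) P (clab j (q j)))) \<and>
    (\<forall>b. ld sz (fst (ins sz P x (c, q))) P b \<le> 1)" (is ?G)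
  proof (cases "?L + sz x \<le> 1")
    case True
    then have e: "ins sz P x (c, q) = (c(x := clab j (q j)), q)"
      unfolding ins_def j_def Let_def by simp
    have "\<forall>b. ld sz (c(x := clab j (q j))) P b \<le> 1"
    proof
      fix b show "ld sz (c(x := clab j (q j))) P b \<le> 1"
      proof (cases "b = clab j (q j)")
        case True then show ?thesis using ld_upd_target[OF fin x] \<open>?L + sz x \<le> 1\<close> by simp
      next
        case False then show ?thesis using ld_upd_other[OF False] feas by simp
      qed
    qed
    then show ?G using e by simp
  next
    case False
    then have e: "ins sz P x (c, q) = (c(x := clab j (Suc (q j))), q(j := Suc (q j)))"
      unfolding ins_def j_def Let_def by simp
    have hl: "1/2 \<le> ?L"
    proof (cases j)
      case (Suc m)
      have "(1::real) / 2 ^ j \<le> 1 / 2" using Suc by (simp add: field_simps)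
      then show ?thesis using False up by linarith
    next
      case 0
      then have "0 < ?L" using False up by simp
      then obtain y where y: "y \<in> P - {x}" "c y = clab j (q j)" using ld_pos_ex by blast
      then have "1 / 2 ^ Suc j < sz y" using low by auto
      moreover have "sz y \<le> ?L" using ld_ge_member[of "P - {x}" y c _ sz] P'fin y nn' by blast
      ultimately show ?thesis using 0 by simp
    qed
    have new0: "ld sz c (P - {x}) (clab j (Suc (q j))) = 0"
      by (rule ld_empty) (use lab in force)
    have "\<forall>b. ld sz (c(x := clab j (Suc (q j)))) P b \<le> 1"
    proof
      fix b show "ld sz (c(x := clab j (Suc (q j)))) P b \<le> 1"
      proof (cases "b = clab j (Suc (q j))")
        case True then show ?thesis using ld_upd_target[OF fin x] new0 sx by simp
      next
        case False then show ?thesis using ld_upd_other[OF False] feas by simp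
      qed
    qed
    moreover have "ld sz (c(x := clab j (Suc (q j)))) P (clab j (q j)) = ?L"
      by (rule ld_upd_other) simp
    ultimately show ?G using e hl by simp
  qed
  then show "fst (ins sz P x (c, q)) = c(x := clab j (snd (ins sz P x (c, q)) j))"
    and "q j \<le> snd (ins sz P x (c, q)) j"
    and "snd (ins sz P x (c, q)) = q \<or>
         (snd (ins sz P x (c, q)) = q(j := Suc (q j)) \<and> 1/2 \<le> ld sz (fst (ins sz P x (c, q))) P (clab j (q j)))"
    and "\<forall>b. ld sz (fst (ins sz P x (c, q))) P b \<le> 1" by blast+
qed

lemma mvl_props:
  fixes sz :: "nat \<Rightarrow> real" and P :: "nat set" and j :: nat
  assumes fin: "finite P" and nn: "\<forall>i\<in>P. 0 \<le> sz i"
  shows "distinct xs \<Longrightarrow> set xs \<subseteq> P \<Longrightarrow> (\<forall>x\<in>set xs. 0 < sz x \<and> sz x \<le> 1 \<and> cls (sz x) = j) \<Longrightarrow>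
   (\<forall>x\<in>set xs. \<forall>k. q j \<le> k \<longrightarrow> c x \<noteq> clab j k) \<Longrightarrow>
   (\<forall>b. ld sz c P b \<le> 1) \<Longrightarrow>
   (\<forall>i\<in>P. \<forall>j' k'. c i = clab j' k' \<longrightarrow> k' \<le> q j') \<Longrightarrow>
   (\<forall>i\<in>P. \<forall>j' k'. c i = clab j' k' \<longrightarrow> 1 / 2 ^ Suc j' < sz i) \<Longrightarrow>
   (let L = mvl sz P xs (c, q); c2 = fst (last ((c, q) # L)); q2 = snd (last ((c, q) # L)) in
     (\<forall>co\<in>set L. \<forall>b. ld sz (fst co) P b \<le> 1) \<and>
     adj (\<lambda>a b. \<exists>y v. b = a(y := v)) (c # map fst L) \<and>
     (\<forall>i. i \<notin> set xs \<longrightarrow> c2 i = c i) \<and>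
     (\<forall>x\<in>set xs. \<exists>k. c2 x = clab j k \<and> q j \<le> k \<and> k \<le> q2 j) \<and>
     (\<forall>j'. j' \<noteq> j \<longrightarrow> q2 j' = q j') \<and> q j \<le> q2 j \<and>
     (\<forall>k. q j \<le> k \<longrightarrow> k < q2 j \<longrightarrow> 1/2 \<le> ld sz c2 P (clab j k)) \<and>
     (\<forall>b. ld sz c2 P b \<le> 1) \<and>
     (\<forall>i\<in>P. \<forall>j' k'. c2 i = clab j' k' \<longrightarrow> k' \<le> q2 j') \<and>
     (\<forall>i\<in>P. \<forall>j' k'. c2 i = clab j' k' \<longrightarrow> 1 / 2 ^ Suc j' < sz i) \<and>
     length L = length xs)"
proof (induction xs arbitrary: c q)
  case Nil then show ?case by simp
next
  case (Cons x xs)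
  note pr = Cons.prems
  have x: "x \<in> P" and sx: "0 < sz x" "sz x \<le> 1" and jx: "cls (sz x) = j" using pr by auto
  have feas: "\<forall>b. ld sz c (P - {x}) b \<le> 1"
  proof
    fix b have "ld sz c (P - {x}) b \<le> ld sz c P b" using fin nn by (intro ld_mono) auto
    then show "ld sz c (P - {x}) b \<le> 1" using pr(5) by (meson order_trans)
  qed
  have lab: "\<forall>i\<in>P - {x}. \<forall>j' k'. c i = clab j' k' \<longrightarrow> k' \<le> q j'" using pr(6) by blast
  have low: "\<forall>i\<in>P - {x}. \<forall>j' k'. c i = clab j' k' \<longrightarrow> 1 / 2 ^ Suc j' < sz i" using pr(7) by blast
  note ip = ins_props[OF fin x sx feas lab low nn, unfolded jx]
  define c1 where "c1 = fst (ins sz P x (c, q))"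
  define q1 where "q1 = snd (ins sz P x (c, q))"
  have i1: "ins sz P x (c, q) = (c1, q1)" unfolding c1_def q1_def by simp
  have c1: "c1 = c(x := clab j (q1 j))" and q1j: "q j \<le> q1 j"
    and q1c: "q1 = q \<or> (q1 = q(j := Suc (q j)) \<and> 1/2 \<le> ld sz c1 P (clab j (q j)))"
    and f1: "\<forall>b. ld sz c1 P b \<le> 1"
    using ip unfolding c1_def[symmetric] q1_def[symmetric] by auto
  have q1o: "\<forall>j'. j' \<noteq> j \<longrightarrow> q1 j' = q j'" using q1c by auto
  have q1le: "\<forall>j'. q j' \<le> q1 j'" using q1c by auto
  have d: "distinct xs" "x \<notin> set xs" using pr(1) by auto
  have h2: "set xs \<subseteq> P" using pr(2) by auto
  have h3: "\<forall>x\<in>set xs. 0 < sz x \<and> sz x \<le> 1 \<and> cls (sz x) = j" using pr(3) by auto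
  have h4: "\<forall>y\<in>set xs. \<forall>k. q1 j \<le> k \<longrightarrow> c1 y \<noteq> clab j k"
    using pr(4) q1j d(2) unfolding c1 by auto
  have h6: "\<forall>i\<in>P. \<forall>j' k'. c1 i = clab j' k' \<longrightarrow> k' \<le> q1 j'"
    using pr(6) q1le unfolding c1 by (metis fun_upd_apply clab_inj order_refl le_trans)
  have h7: "\<forall>i\<in>P. \<forall>j' k'. c1 i = clab j' k' \<longrightarrow> 1 / 2 ^ Suc j' < sz i"
    using pr(7) cls_lower[OF sx(1)] jx unfolding c1 by auto
  have IH: "let L = mvl sz P xs (c1, q1); c2 = fst (last ((c1, q1) # L)); q2 = snd (last ((c1, q1) # L)) in
     (\<forall>co\<in>set L. \<forall>b. ld sz (fst co) P b \<le> 1) \<and>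
     adj (\<lambda>a b. \<exists>y v. b = a(y := v)) (c1 # map fst L) \<and>
     (\<forall>i. i \<notin> set xs \<longrightarrow> c2 i = c1 i) \<and>
     (\<forall>x\<in>set xs. \<exists>k. c2 x = clab j k \<and> q1 j \<le> k \<and> k \<le> q2 j) \<and>
     (\<forall>j'. j' \<noteq> j \<longrightarrow> q2 j' = q1 j') \<and> q1 j \<le> q2 j \<and>
     (\<forall>k. q1 j \<le> k \<longrightarrow> k < q2 j \<longrightarrow> 1/2 \<le> ld sz c2 P (clab j k)) \<and>
     (\<forall>b. ld sz c2 P b \<le> 1) \<and>
     (\<forall>i\<in>P. \<forall>j' k'. c2 i = clab j' k' \<longrightarrow> k' \<le> q2 j') \<and>
     (\<forall>i\<in>P. \<forall>j' k'. c2 i = clab j' k' \<longrightarrow> 1 / 2 ^ Suc j' < sz i) \<and>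
     length L = length xs"
    by (rule Cons.IH[OF d(1) h2 h3 h4 f1 h6 h7])
  define L2 where "L2 = mvl sz P xs (c1, q1)"
  define c2 where "c2 = fst (last ((c1, q1) # L2))"
  define q2 where "q2 = snd (last ((c1, q1) # L2))"
  have mvE: "mvl sz P (x # xs) (c, q) = (c1, q1) # L2" unfolding L2_def using i1 by simp
  have last_eq: "last ((c, q) # mvl sz P (x # xs) (c, q)) = last ((c1, q1) # L2)" unfolding mvE by simp
  have I1: "\<forall>co\<in>set L2. \<forall>b. ld sz (fst co) P b \<le> 1"
    and I2: "adj (\<lambda>a b. \<exists>y v. b = a(y := v)) (c1 # map fst L2)"
    and I3: "\<forall>i. i \<notin> set xs \<longrightarrow> c2 i = c1 i"
    and I4: "\<forall>x\<in>set xs. \<exists>k. c2 x = clab j k \<and> q1 j \<le> k \<and> k \<le> q2 j"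
    and I5: "\<forall>j'. j' \<noteq> j \<longrightarrow> q2 j' = q1 j'" "q1 j \<le> q2 j"
    and I6: "\<forall>k. q1 j \<le> k \<longrightarrow> k < q2 j \<longrightarrow> 1/2 \<le> ld sz c2 P (clab j k)"
    and I7: "\<forall>b. ld sz c2 P b \<le> 1"
    and I8: "\<forall>i\<in>P. \<forall>j' k'. c2 i = clab j' k' \<longrightarrow> k' \<le> q2 j'"
    and I9: "\<forall>i\<in>P. \<forall>j' k'. c2 i = clab j' k' \<longrightarrow> 1 / 2 ^ Suc j' < sz i"
    and I10: "length L2 = length xs"
    using IH unfolding L2_def[symmetric] c2_def[symmetric] q2_def[symmetric] Let_def by auto
  have R6: "\<forall>k. q j \<le> k \<longrightarrow> k < q2 j \<longrightarrow> 1/2 \<le> ld sz c2 P (clab j k)"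
  proof (intro allI impI)
    fix k assume k: "q j \<le> k" "k < q2 j"
    show "1/2 \<le> ld sz c2 P (clab j k)"
    proof (cases "q1 j \<le> k")
      case True then show ?thesis using I6 k by auto
    next
      case False
      then have q1s: "q1 = q(j := Suc (q j))" and hl: "1/2 \<le> ld sz c1 P (clab j (q j))"
        using q1c k by auto
      then have kk: "k = q j" using False k by simp
      have "ld sz c2 P (clab j (q j)) = ld sz c1 P (clab j (q j))"
      proof (rule ld_cong)
        fix i assume i: "i \<in> P"
        show "(c2 i = clab j (q j)) = (c1 i = clab j (q j))"
        proof (cases "i \<in> set xs")
          case False then show ?thesis using I3 by auto
        next
          case True
          then have "c1 i \<noteq> clab j (q j)" using pr(4) d(2) unfolding c1 by (metis fun_upd_other list.set_intros(2) order_refl)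
          moreover have "c2 i \<noteq> clab j (q j)" using I4 True q1s by fastforce
          ultimately show ?thesis by simp
        qed
      qed
      then show ?thesis using hl kk by simp
    qed
  qed
  have R4: "\<forall>y\<in>set (x # xs). \<exists>k. c2 y = clab j k \<and> q j \<le> k \<and> k \<le> q2 j"
  proof
    fix y assume "y \<in> set (x # xs)"
    then show "\<exists>k. c2 y = clab j k \<and> q j \<le> k \<and> k \<le> q2 j"
    proof (cases "y = x")
      case True
      then have "c2 y = clab j (q1 j)" using I3 d(2) c1 by simp
      then show ?thesis using q1j I5 by blast
    next
      case False
      then have "y \<in> set xs" using \<open>y \<in> set (x # xs)\<close> by simp
      then show ?thesis using I4 q1j by (meson le_trans)
    qed
  qed
  have E1: "fst (last ((c, q) # mvl sz P (x # xs) (c, q))) = c2" using last_eq c2_def by simp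
  have E2: "snd (last ((c, q) # mvl sz P (x # xs) (c, q))) = q2" using last_eq q2_def by simp
  show ?case unfolding Let_def E1 E2 unfolding mvE
  proof (intro conjI)
    show "\<forall>co\<in>set ((c1, q1) # L2). \<forall>b. ld sz (fst co) P b \<le> 1" using I1 f1 by simp
    show "adj (\<lambda>a b. \<exists>y v. b = a(y := v)) (c # map fst ((c1, q1) # L2))"
      using I2 c1 by auto
    show "\<forall>i. i \<notin> set (x # xs) \<longrightarrow> c2 i = c i" using I3 c1 by simp
    show "\<forall>y\<in>set (x # xs). \<exists>k. c2 y = clab j k \<and> q j \<le> k \<and> k \<le> q2 j" by (rule R4)
    show "\<forall>j'. j' \<noteq> j \<longrightarrow> q2 j' = q j'" using I5 q1o by simp
    show "q j \<le> q2 j" using q1j I5 by simp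
    show "\<forall>k. q j \<le> k \<longrightarrow> k < q2 j \<longrightarrow> 1/2 \<le> ld sz c2 P (clab j k)" by (rule R6)
    show "\<forall>b. ld sz c2 P b \<le> 1" by (rule I7)
    show "\<forall>i\<in>P. \<forall>j' k'. c2 i = clab j' k' \<longrightarrow> k' \<le> q2 j'" by (rule I8)
    show "\<forall>i\<in>P. \<forall>j' k'. c2 i = clab j' k' \<longrightarrow> 1 / 2 ^ Suc j' < sz i" by (rule I9)
    show "length ((c1, q1) # L2) = length (x # xs)" using I10 by simp
  qed
qed

definition psi :: "real \<Rightarrow> (nat \<Rightarrow> real) \<Rightarrow> (nat \<Rightarrow> nat) \<Rightarrow> nat set \<Rightarrow> nat \<Rightarrow> nat \<Rightarrow> real" where
  "psi be sz c P j k = (if \<exists>i\<in>P. c i = clab j k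
     then be * max 0 ((1/2 - ld sz c P (clab j k)) * 2 ^ j) else 0)"

definition Phi :: "real \<Rightarrow> (nat \<Rightarrow> real) \<Rightarrow> (nat \<Rightarrow> nat) \<Rightarrow> (nat \<Rightarrow> nat) \<Rightarrow> nat set \<Rightarrow> real" where
  "Phi be sz c q P = (\<Sum>jk\<in>{(j, k). k < q j}. psi be sz c P (fst jk) (snd jk))"

definition bet :: "real \<Rightarrow> real" where "bet al = 4 * al / (1 - 2 * al)"

definition invar :: "item list \<Rightarrow> real \<Rightarrow> st \<Rightarrow> nat set \<Rightarrow> bool" where
  "invar I al s P \<longleftrightarrow>
     finite P \<and> P \<subseteq> {..<length I} \<and>
     (\<forall>i\<in>P. szs s i = isize (I!i)) \<and>
     (\<forall>i\<in>P. (\<exists>e. cf s i = tlab e \<and> szs s i \<le> 1 / 2 ^ e \<and> e \<le> ep (rmx s)) \<or>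
             (\<exists>k. cf s i = clab (cls (szs s i)) k \<and> k \<le> opn s (cls (szs s i)) \<and> 0 < szs s i
                  \<and> cls (szs s i) < ep (rmx s))) \<and>
     (\<forall>e. card {i\<in>P. cf s i = tlab e} \<le> 2 ^ e) \<and>
     (\<forall>b. ld (szs s) (cf s) P b \<le> 1) \<and>
     (\<forall>j k. k < opn s j \<longrightarrow> (\<exists>i\<in>P. cf s i = clab j k) \<longrightarrow> al \<le> ld (szs s) (cf s) P (clab j k)) \<and>
     (\<forall>j. ep (rmx s) \<le> j \<longrightarrow> opn s j = 0) \<and>
     rmx s \<le> rho I \<and>
     real (migs s) + Phi (bet al) (szs s) (cf s) (opn s) P \<le> bet al * real (deps s)"

lemma bet_pos: "0 < al \<Longrightarrow> al < 1/2 \<Longrightarrow> 0 < bet al"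
  unfolding bet_def by (simp add: field_simps)

lemma bet_id: "al < 1/2 \<Longrightarrow> bet al * (1/2 - al) = 2 * al"
  unfolding bet_def by (simp add: field_simps)

lemma psi_nonneg: "0 \<le> be \<Longrightarrow> 0 \<le> psi be sz c P j k"
  unfolding psi_def by auto

lemma psi_zero_half: "1/2 \<le> ld sz c P (clab j k) \<Longrightarrow> psi be sz c P j k = 0"
proof -
  assume a: "1/2 \<le> ld sz c P (clab j k)"
  have "(1/2 - ld sz c P (clab j k)) * 2 ^ j \<le> 0" using a by (intro mult_nonpos_nonneg) auto
  then have "max 0 ((1/2 - ld sz c P (clab j k)) * 2 ^ j) = 0" by simp
  then show ?thesis unfolding psi_def by simp
qed

lemma psi_cong: "(\<exists>i\<in>P'. c' i = clab j k) = (\<exists>i\<in>P. c i = clab j k) \<Longrightarrow>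
   ld sz' c' P' (clab j k) = ld sz c P (clab j k) \<Longrightarrow> psi be sz' c' P' j k = psi be sz c P j k"
  unfolding psi_def by simp

lemma idx_finite: "(\<forall>j. E \<le> j \<longrightarrow> q j = 0) \<Longrightarrow> finite {(j, k). k < (q::nat\<Rightarrow>nat) j}"
proof -
  assume a: "\<forall>j. E \<le> j \<longrightarrow> q j = 0"
  have "{(j, k). k < q j} \<subseteq> Sigma {..<E} (\<lambda>j. {..<q j})"
    using a by (auto simp: not_less[symmetric])
  then show ?thesis by (rule finite_subset) auto
qed

lemma Phi_nonneg: "0 \<le> be \<Longrightarrow> 0 \<le> Phi be sz c q P"
  unfolding Phi_def by (rule sum_nonneg) (simp add: psi_nonneg)

context
  fixes I :: "item list" and al :: real and s :: st and P :: "nat set"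
  assumes iv: "invar I al s P"
begin

lemma iv_fin: "finite P" using iv unfolding invar_def by auto
lemma iv_sz: "i \<in> P \<Longrightarrow> szs s i = isize (I!i)" using iv unfolding invar_def by auto
lemma iv_sub: "P \<subseteq> {..<length I}" using iv unfolding invar_def by auto
lemma iv_lab: "i \<in> P \<Longrightarrow> (\<exists>e. cf s i = tlab e \<and> szs s i \<le> 1 / 2 ^ e \<and> e \<le> ep (rmx s)) \<or>
             (\<exists>k. cf s i = clab (cls (szs s i)) k \<and> k \<le> opn s (cls (szs s i)) \<and> 0 < szs s i
                  \<and> cls (szs s i) < ep (rmx s))" using iv unfolding invar_def by auto
lemma iv_tcard: "card {i\<in>P. cf s i = tlab e} \<le> 2 ^ e" using iv unfolding invar_def by auto
lemma iv_feas: "ld (szs s) (cf s) P b \<le> 1" using iv unfolding invar_def by auto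
lemma iv_closed: "k < opn s j \<Longrightarrow> (\<exists>i\<in>P. cf s i = clab j k) \<Longrightarrow> al \<le> ld (szs s) (cf s) P (clab j k)"
  using iv unfolding invar_def by auto
lemma iv_opn0: "ep (rmx s) \<le> j \<Longrightarrow> opn s j = 0" using iv unfolding invar_def by auto
lemma iv_rmx: "rmx s \<le> rho I" using iv unfolding invar_def by auto
lemma iv_pot: "real (migs s) + Phi (bet al) (szs s) (cf s) (opn s) P \<le> bet al * real (deps s)"
  using iv unfolding invar_def by auto

lemma iv_clab: assumes "i \<in> P" "cf s i = clab j k"
  shows "cls (szs s i) = j" "0 < szs s i" "k \<le> opn s j" "j < ep (rmx s)"
  using iv_lab[OF assms(1)] assms(2) by auto

lemma iv_tlab: assumes "i \<in> P" "cf s i = tlab e"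
  shows "szs s i \<le> 1 / 2 ^ e" "e \<le> ep (rmx s)"
  using iv_lab[OF assms(1)] assms(2) by auto

context assumes wf: "well_formed I"
begin
lemma iv_szb: "i \<in> P \<Longrightarrow> 0 \<le> szs s i \<and> szs s i \<le> 1"
  using iv_sz size_bounds[OF wf] iv_sub by auto

lemma iv_clab_bounds: assumes "i \<in> P" "cf s i = clab j k"
  shows "1 / 2 ^ Suc j < szs s i" "szs s i \<le> 1 / 2 ^ j"
  using iv_clab[OF assms] cls_lower cls_upper iv_szb[OF assms(1)] by auto
end

lemma iv_idx_fin: "finite {(j, k). k < opn s j}"
  using idx_finite iv_opn0 by blast

end

lemma step_arr:
  assumes wf: "well_formed I" and al: "0 < al" "al < 1/2"
    and iv: "invar I al s P" and iP: "i \<notin> P" and Q: "Q = insert i P" and i: "i < length I"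
    and z: "z = isize (I!i)" and cq: "card Q \<le> rho I"
    and st: "step al Q s (Arr t i z) = (s', out)"
  shows "invar I al s' Q" "out = [cf s']" "\<forall>x\<in>P. cf s' x = cf s x"
    "migs s' = migs s" "deps s' = deps s"
proof -
  define c where "c = cf s"
  define q where "q = opn s"
  define sz where "sz = szs s"
  define sz' where "sz' = sz(i := z)"
  define r' where "r' = max (rmx s) (card Q)"
  define E where "E = ep r'"
  have finP: "finite P" using iv_fin[OF iv] .
  have finQ: "finite Q" using finP Q by simp
  have QP: "Q - {i} = P" using Q iP by auto
  have iQ: "i \<in> Q" using Q by simp
  have zb: "0 \<le> z" "z \<le> 1" using size_bounds[OF wf i] z by auto
  have szQ: "\<forall>x\<in>Q. sz' x = isize (I!x)" using iv_sz[OF iv] z Q unfolding sz'_def sz_def by auto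
  have nnQ: "\<forall>x\<in>Q. 0 \<le> sz' x" using szQ size_bounds[OF wf] iv_sub[OF iv] Q i by auto
  have subQ: "Q \<subseteq> {..<length I}" using iv_sub[OF iv] Q i by auto
  have EE: "ep (rmx s) \<le> E" unfolding E_def r'_def by (rule ep_mono) simp
  have r'rho: "r' \<le> rho I" unfolding r'_def using iv_rmx[OF iv] cq by simp
  have cQ: "card Q \<le> 2 ^ E" using ep_ge[of r'] unfolding E_def r'_def by simp
  have ldP: "\<And>c b. ld sz' c P b = ld sz c P b" unfolding sz'_def using iP by (rule ld_upd_sz)
  have szP: "\<And>x. x \<in> P \<Longrightarrow> sz' x = sz x" unfolding sz'_def using iP by auto
  have stE: "step al Q s (Arr t i z) = (if z \<le> 1 / 2 ^ E
      then (s\<lparr>cf := c(i := tlab E), szs := sz', rmx := r'\<rparr>, [c(i := tlab E)])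
      else (let co = ins sz' Q i (c, q) in (s\<lparr>cf := fst co, opn := snd co, szs := sz', rmx := r'\<rparr>, [fst co])))"
    unfolding step_def c_def q_def sz'_def sz_def r'_def E_def Let_def by simp
  have G: "invar I al s' Q \<and> out = [cf s'] \<and> (\<forall>x\<in>P. cf s' x = cf s x) \<and> migs s' = migs s \<and> deps s' = deps s"
  proof (cases "z \<le> 1 / 2 ^ E")
    case True
    define c' where "c' = c(i := tlab E)"
    have s': "s' = s\<lparr>cf := c', szs := sz', rmx := r'\<rparr>" and out: "out = [c']"
      using st True unfolding stE c'_def by auto
    have lab: "\<forall>x\<in>Q. (\<exists>e. c' x = tlab e \<and> sz' x \<le> 1 / 2 ^ e \<and> e \<le> ep r') \<or>
             (\<exists>k. c' x = clab (cls (sz' x)) k \<and> k \<le> q (cls (sz' x)) \<and> 0 < sz' x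
                  \<and> cls (sz' x) < ep r')"
    proof
      fix x assume x: "x \<in> Q"
      show "(\<exists>e. c' x = tlab e \<and> sz' x \<le> 1 / 2 ^ e \<and> e \<le> ep r') \<or>
             (\<exists>k. c' x = clab (cls (sz' x)) k \<and> k \<le> q (cls (sz' x)) \<and> 0 < sz' x
                  \<and> cls (sz' x) < ep r')"
      proof (cases "x = i")
        case True then show ?thesis using \<open>z \<le> 1 / 2 ^ E\<close> unfolding c'_def sz'_def E_def by auto
      next
        case False
        then have xP: "x \<in> P" using x Q by auto
        then show ?thesis using iv_lab[OF iv xP] EE False szP[OF xP]
          unfolding c'_def c_def q_def sz_def E_def by (auto intro: le_trans less_le_trans)
      qed
    qed
    have tc: "\<forall>e. card {x\<in>Q. c' x = tlab e} \<le> 2 ^ e"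
    proof
      fix e show "card {x\<in>Q. c' x = tlab e} \<le> 2 ^ e"
      proof (cases "e = E")
        case True
        have "card {x\<in>Q. c' x = tlab e} \<le> card Q" using finQ by (intro card_mono) auto
        then show ?thesis using cQ True by simp
      next
        case False
        then have "{x\<in>Q. c' x = tlab e} = {x\<in>P. c x = tlab e}" using Q iP unfolding c'_def by auto
        then show ?thesis using iv_tcard[OF iv] unfolding c_def by simp
      qed
    qed
    have fe: "\<forall>b. ld sz' c' Q b \<le> 1"
    proof
      fix b show "ld sz' c' Q b \<le> 1"
      proof (cases "b = tlab E")
        case True
        have "ld sz' c' Q b \<le> of_nat (card {x\<in>Q. c' x = b}) * (1 / 2 ^ E)"
          unfolding ld_def
        proof (rule sum_bounded_above)
          fix x assume x: "x \<in> {x\<in>Q. c' x = b}"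
          show "sz' x \<le> 1 / 2 ^ E"
          proof (cases "x = i")
            case True then show ?thesis using \<open>z \<le> 1 / 2 ^ E\<close> unfolding sz'_def by simp
          next
            case False
            then have "x \<in> P" "cf s x = tlab E" using x Q \<open>b = tlab E\<close> unfolding c'_def c_def by auto
            then show ?thesis using iv_tlab[OF iv] szP unfolding sz_def by auto
          qed
        qed
        also have "\<dots> \<le> of_nat ((2::nat) ^ E) * (1 / 2 ^ E)"
          using tc True by (intro mult_right_mono) auto
        also have "\<dots> = 1" by simp
        finally show ?thesis .
      next
        case False
        then have "ld sz' c' Q b = ld sz' c P b" unfolding c'_def using QP by (simp add: ld_upd_other)
        then show ?thesis using ldP iv_feas[OF iv] unfolding c_def sz_def by simp
      qed
    qed
    have mem: "\<And>j k. (\<exists>x\<in>Q. c' x = clab j k) = (\<exists>x\<in>P. c x = clab j k)"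
      using Q iP unfolding c'_def by auto
    have ldc: "\<And>j k. ld sz' c' Q (clab j k) = ld sz c P (clab j k)"
      unfolding c'_def using QP ldP by (simp add: ld_upd_other)
    have cl: "\<forall>j k. k < q j \<longrightarrow> (\<exists>x\<in>Q. c' x = clab j k) \<longrightarrow> al \<le> ld sz' c' Q (clab j k)"
      using iv_closed[OF iv] mem ldc unfolding c_def q_def sz_def by simp
    have o0: "\<forall>j. ep r' \<le> j \<longrightarrow> q j = 0" using iv_opn0[OF iv] EE unfolding q_def E_def by simp
    have "Phi (bet al) sz' c' q Q = Phi (bet al) sz c q P"
      unfolding Phi_def by (rule sum.cong[OF refl]) (rule psi_cong[OF mem ldc])
    then have pot: "real (migs s) + Phi (bet al) sz' c' q Q \<le> bet al * real (deps s)"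
      using iv_pot[OF iv] unfolding c_def q_def sz_def by simp
    have "invar I al s' Q" unfolding invar_def s'
      using finQ subQ szQ lab tc fe cl o0 r'rho pot unfolding q_def by simp
    then show ?thesis using s' out iP unfolding c'_def c_def by auto
  next
    case False
    define j where "j = cls z"
    have zpos: "0 < z" using False zb by (smt (verit) zero_less_divide_1_iff zero_less_power)
    have jE: "j < E" unfolding j_def using cls_lt False zb by simp
    define c2 where "c2 = fst (ins sz' Q i (c, q))"
    define q2 where "q2 = snd (ins sz' Q i (c, q))"
    have s': "s' = s\<lparr>cf := c2, opn := q2, szs := sz', rmx := r'\<rparr>" and out: "out = [c2]"
      using st False unfolding stE c2_def q2_def Let_def by auto
    have f0: "\<forall>b. ld sz' c (Q - {i}) b \<le> 1" using QP ldP iv_feas[OF iv] unfolding c_def sz_def by simp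
    have lab0: "\<forall>x\<in>Q - {i}. \<forall>j' k'. c x = clab j' k' \<longrightarrow> k' \<le> q j'"
      using QP iv_clab[OF iv] unfolding c_def q_def by auto
    have low0: "\<forall>x\<in>Q - {i}. \<forall>j' k'. c x = clab j' k' \<longrightarrow> 1 / 2 ^ Suc j' < sz' x"
      using QP iv_clab_bounds[OF iv wf] szP unfolding c_def sz_def by auto
    have szi: "sz' i = z" unfolding sz'_def by simp
    note ip = ins_props[of Q i sz' c q, OF finQ iQ, unfolded szi, OF zpos zb(2) f0 lab0 low0 nnQ,
        folded j_def c2_def q2_def]
    have c2: "c2 = c(i := clab j (q2 j))" and qj: "q j \<le> q2 j"
      and q2c: "q2 = q \<or> (q2 = q(j := Suc (q j)) \<and> 1/2 \<le> ld sz' c2 Q (clab j (q j)))"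
      and fe: "\<forall>b. ld sz' c2 Q b \<le> 1" using ip by auto
    have qle: "\<forall>j'. q j' \<le> q2 j'" using q2c by auto
    have qo: "\<forall>j'. j' \<noteq> j \<longrightarrow> q2 j' = q j'" using q2c by auto
    have lab: "\<forall>x\<in>Q. (\<exists>e. c2 x = tlab e \<and> sz' x \<le> 1 / 2 ^ e \<and> e \<le> ep r') \<or>
             (\<exists>k. c2 x = clab (cls (sz' x)) k \<and> k \<le> q2 (cls (sz' x)) \<and> 0 < sz' x
                  \<and> cls (sz' x) < ep r')"
    proof
      fix x assume x: "x \<in> Q"
      show "(\<exists>e. c2 x = tlab e \<and> sz' x \<le> 1 / 2 ^ e \<and> e \<le> ep r') \<or>
             (\<exists>k. c2 x = clab (cls (sz' x)) k \<and> k \<le> q2 (cls (sz' x)) \<and> 0 < sz' x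
                  \<and> cls (sz' x) < ep r')"
      proof (cases "x = i")
        case True then show ?thesis using zpos jE szi unfolding c2 j_def E_def by auto
      next
        case False
        then have xP: "x \<in> P" using x Q by auto
        have "(\<exists>e. c x = tlab e \<and> sz x \<le> 1 / 2 ^ e \<and> e \<le> ep (rmx s)) \<or>
             (\<exists>k. c x = clab (cls (sz x)) k \<and> k \<le> q (cls (sz x)) \<and> 0 < sz x
                  \<and> cls (sz x) < ep (rmx s))" using iv_lab[OF iv xP] unfolding c_def q_def sz_def .
        then show ?thesis using EE False szP[OF xP] qle unfolding c2 E_def
          by (auto intro: le_trans less_le_trans)
      qed
    qed
    have tc: "\<forall>e. card {x\<in>Q. c2 x = tlab e} \<le> 2 ^ e"
    proof
      fix e
      have "{x\<in>Q. c2 x = tlab e} = {x\<in>P. c x = tlab e}" using Q iP unfolding c2 by auto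
      then show "card {x\<in>Q. c2 x = tlab e} \<le> 2 ^ e" using iv_tcard[OF iv] unfolding c_def by simp
    qed
    have cl: "\<forall>j' k'. k' < q2 j' \<longrightarrow> (\<exists>x\<in>Q. c2 x = clab j' k') \<longrightarrow> al \<le> ld sz' c2 Q (clab j' k')"
    proof (intro allI impI)
      fix j' k' assume k': "k' < q2 j'" and ne: "\<exists>x\<in>Q. c2 x = clab j' k'"
      show "al \<le> ld sz' c2 Q (clab j' k')"
      proof (cases "j' = j \<and> k' = q j \<and> q2 \<noteq> q")
        case True
        then have "1/2 \<le> ld sz' c2 Q (clab j' k')" using q2c by auto
        then show ?thesis using al by simp
      next
        case False
        then have kq: "k' < q j'" using k' q2c by (auto split: if_splits)
        then have ne2: "clab j' k' \<noteq> clab j (q2 j)" using qj by auto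
        then have "ld sz' c2 Q (clab j' k') = ld sz c P (clab j' k')"
          unfolding c2 using QP ldP by (simp add: ld_upd_other)
        moreover have "\<exists>x\<in>P. c x = clab j' k'"
        proof -
          obtain x where x: "x \<in> Q" "c2 x = clab j' k'" using ne by blast
          have "x \<noteq> i" using x(2) ne2 unfolding c2 by auto
          then show ?thesis using x Q unfolding c2 by auto
        qed
        ultimately show ?thesis using iv_closed[OF iv] kq unfolding c_def q_def sz_def by simp
      qed
    qed
    have o0: "\<forall>j'. ep r' \<le> j' \<longrightarrow> q2 j' = 0"
      using iv_opn0[OF iv] EE qo jE unfolding q_def E_def by (metis le_trans not_le)
    have psieq: "\<And>j' k'. k' < q j' \<Longrightarrow> psi (bet al) sz' c2 Q j' k' = psi (bet al) sz c P j' k'"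
    proof -
      fix j' k' assume kq: "k' < q j'"
      then have ne2: "clab j' k' \<noteq> clab j (q2 j)" using qj by auto
      show "psi (bet al) sz' c2 Q j' k' = psi (bet al) sz c P j' k'"
      proof (rule psi_cong)
        show "(\<exists>x\<in>Q. c2 x = clab j' k') = (\<exists>x\<in>P. c x = clab j' k')" using ne2 Q iP unfolding c2 by auto
        show "ld sz' c2 Q (clab j' k') = ld sz c P (clab j' k')"
          unfolding c2 using QP ldP ne2 by (simp add: ld_upd_other)
      qed
    qed
    have PhiEq: "Phi (bet al) sz' c2 q2 Q = Phi (bet al) sz c q P"
    proof (cases "q2 = q")
      case True
      then show ?thesis unfolding Phi_def by (intro sum.cong) (auto simp: psieq)
    next
      case False
      then have q2s: "q2 = q(j := Suc (q j))" and h: "1/2 \<le> ld sz' c2 Q (clab j (q j))" using q2c by auto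
      have idx: "{(j', k'). k' < q2 j'} = insert (j, q j) {(j', k'). k' < q j'}"
        unfolding q2s by (auto split: if_splits)
      have nin: "(j, q j) \<notin> {(j', k'). k' < q j'}" by simp
      have fin: "finite {(j', k'). k' < q j'}" using iv_idx_fin[OF iv] unfolding q_def .
      have "Phi (bet al) sz' c2 q2 Q = psi (bet al) sz' c2 Q j (q j) +
            (\<Sum>jk\<in>{(j', k'). k' < q j'}. psi (bet al) sz' c2 Q (fst jk) (snd jk))"
        unfolding Phi_def idx using fin nin by simp
      also have "\<dots> = (\<Sum>jk\<in>{(j', k'). k' < q j'}. psi (bet al) sz c P (fst jk) (snd jk))"
        using psi_zero_half[OF h] by (auto intro!: sum.cong simp: psieq)
      finally show ?thesis unfolding Phi_def .
    qed
    then have pot: "real (migs s) + Phi (bet al) sz' c2 q2 Q \<le> bet al * real (deps s)"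
      using iv_pot[OF iv] unfolding c_def q_def sz_def by simp
    have "invar I al s' Q" unfolding invar_def s'
      using finQ subQ szQ lab tc fe cl o0 r'rho pot by simp
    then show ?thesis using s' out iP unfolding c2 c_def by auto
  qed
  then show "invar I al s' Q" "out = [cf s']" "\<forall>x\<in>P. cf s' x = cf s x"
    "migs s' = migs s" "deps s' = deps s" by auto
qed

lemma sum_le_plus_one:
  fixes f g :: "'a \<Rightarrow> real"
  assumes "finite A" "\<And>x. x \<in> A \<Longrightarrow> x \<noteq> a \<Longrightarrow> f x \<le> g x" "a \<in> A \<Longrightarrow> f a \<le> g a + d" "0 \<le> d"
  shows "sum f A \<le> sum g A + d"
proof (cases "a \<in> A")
  case True
  have "sum f A = f a + sum f (A - {a})" using assms(1) True by (simp add: sum.remove)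
  also have "\<dots> \<le> (g a + d) + sum g (A - {a})"
    using assms True by (intro add_mono sum_mono) auto
  also have "\<dots> = sum g A + d" using assms(1) True by (simp add: sum.remove)
  finally show ?thesis .
next
  case False
  then have "sum f A \<le> sum g A" using assms by (intro sum_mono) auto
  then show ?thesis using assms(4) by simp
qed

lemma ld_split: "finite P \<Longrightarrow> i \<in> P \<Longrightarrow> ld sz c P (c i) = ld sz c (P - {i}) (c i) + sz i"
  using ld_upd_target[of P i sz c "c i"] by simp

lemma psi_dep:
  assumes fin: "finite P" and iP: "i \<in> P" and ci: "c i = clab j k" and nn: "\<forall>x\<in>P. 0 \<le> sz x"
    and up: "sz i \<le> 1 / 2 ^ j" and be: "0 \<le> be"
  shows "psi be sz c (P - {i}) j k \<le> psi be sz c P j k + be"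
proof -
  define L where "L = ld sz c P (clab j k)"
  have L': "ld sz c (P - {i}) (clab j k) = L - sz i" using ld_split[OF fin iP, of sz c] ci unfolding L_def by simp
  have pP: "psi be sz c P j k = be * max 0 ((1/2 - L) * 2 ^ j)" unfolding psi_def L_def using iP ci by auto
  have d: "0 \<le> sz i * 2 ^ j" "sz i * 2 ^ j \<le> 1" using nn iP up by (auto simp: field_simps)
  have "(1/2 - (L - sz i)) * 2 ^ j = (1/2 - L) * 2 ^ j + sz i * 2 ^ j" by (simp add: algebra_simps)
  then have m: "max 0 ((1/2 - (L - sz i)) * 2 ^ j) \<le> max 0 ((1/2 - L) * 2 ^ j) + 1" using d by simp
  have "psi be sz c (P - {i}) j k \<le> be * max 0 ((1/2 - (L - sz i)) * 2 ^ j)"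
    unfolding psi_def L' using be by auto
  also have "\<dots> \<le> be * (max 0 ((1/2 - L) * 2 ^ j) + 1)" using m be by (rule mult_left_mono)
  also have "\<dots> = psi be sz c P j k + be" using pP by (simp add: algebra_simps)
  finally show ?thesis .
qed

lemma Phi_dep:
  assumes fin: "finite P" and iP: "i \<in> P" and nn: "\<forall>x\<in>P. 0 \<le> sz x" and be: "0 \<le> be"
    and fidx: "finite {(j, k). k < q j}"
    and up: "\<And>j k. c i = clab j k \<Longrightarrow> sz i \<le> 1 / 2 ^ j"
  shows "Phi be sz c q (P - {i}) \<le> Phi be sz c q P + be"
  unfolding Phi_def
proof (rule sum_le_plus_one[OF fidx _ _ be, where a = "prod_decode (c i div 2)"])
  fix jk assume jk: "jk \<in> {(j, k). k < q j}" "jk \<noteq> prod_decode (c i div 2)"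
  have ne: "c i \<noteq> clab (fst jk) (snd jk)" using jk(2) by (metis clab_dec prod.collapse)
  show "psi be sz c (P - {i}) (fst jk) (snd jk) \<le> psi be sz c P (fst jk) (snd jk)"
  proof (rule eq_refl, rule psi_cong)
    show "(\<exists>x\<in>P - {i}. c x = clab (fst jk) (snd jk)) = (\<exists>x\<in>P. c x = clab (fst jk) (snd jk))"
      using ne iP by auto
    show "ld sz c (P - {i}) (clab (fst jk) (snd jk)) = ld sz c P (clab (fst jk) (snd jk))"
      using ne by (rule ld_remove_other)
  qed
next
  let ?a = "prod_decode (c i div 2)"
  show "psi be sz c (P - {i}) (fst ?a) (snd ?a) \<le> psi be sz c P (fst ?a) (snd ?a) + be"
  proof (cases "c i = clab (fst ?a) (snd ?a)")
    case True
    then show ?thesis using psi_dep[of P i c "fst ?a" "snd ?a" sz be] fin iP True nn up[OF True] be by blast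
  next
    case False
    have "psi be sz c (P - {i}) (fst ?a) (snd ?a) = psi be sz c P (fst ?a) (snd ?a)"
    proof (rule psi_cong)
      show "(\<exists>x\<in>P - {i}. c x = clab (fst ?a) (snd ?a)) = (\<exists>x\<in>P. c x = clab (fst ?a) (snd ?a))"
        using False iP by auto
      show "ld sz c (P - {i}) (clab (fst ?a) (snd ?a)) = ld sz c P (clab (fst ?a) (snd ?a))"
        using False by (rule ld_remove_other)
    qed
    then show ?thesis using be by simp
  qed
qed

lemma step_dep:
  assumes wf: "well_formed I" and al: "0 < al" "al < 1/2"
    and iv: "invar I al s P" and iP: "i \<in> P" and Q: "Q = P - {i}"
    and st: "step al Q s (Dep t i) = (s', out)"
  shows "invar I al s' Q" "out \<noteq> []" "hd out = cf s" "last out = cf s'"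
    "\<forall>c\<in>set out. \<forall>b. ld (szs s') c Q b \<le> 1" "szs s' = szs s"
    "adj (\<lambda>a b. \<exists>y v. b = a(y := v)) out"
    "migs s' = migs s + (length out - 1)" "deps s' = Suc (deps s)"
proof -
  define c where "c = cf s"
  define q where "q = opn s"
  define sz where "sz = szs s"
  define b where "b = c i"
  define be where "be = bet al"
  have bep: "0 < be" unfolding be_def using bet_pos al by simp
  have finP: "finite P" using iv_fin[OF iv] .
  have finQ: "finite Q" using finP Q by simp
  have QP: "Q \<subseteq> P" using Q by auto
  have nnP: "\<forall>x\<in>P. 0 \<le> sz x" using iv_szb[OF iv wf] unfolding sz_def by auto
  have nnQ: "\<forall>x\<in>Q. 0 \<le> sz x" using nnP QP by auto
  have fidx: "finite {(j, k). k < q j}" using iv_idx_fin[OF iv] unfolding q_def .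
  have ldQ: "\<And>b'. ld sz c Q b' \<le> ld sz c P b'" using finP nnP QP by (intro ld_mono) auto
  have feQ: "\<forall>b'. ld sz c Q b' \<le> 1" using ldQ iv_feas[OF iv] unfolding c_def sz_def by (meson order_trans)
  have PhiQ: "Phi be sz c q Q \<le> Phi be sz c q P + be"
    unfolding Q
  proof (rule Phi_dep[OF finP iP nnP _ fidx])
    show "0 \<le> be" using bep by simp
    fix j k assume "c i = clab j k"
    then show "sz i \<le> 1 / 2 ^ j" using iv_clab_bounds[OF iv wf iP] unfolding c_def sz_def by auto
  qed
  have pot0: "real (migs s) + Phi be sz c q P \<le> be * real (deps s)"
    using iv_pot[OF iv] unfolding c_def q_def sz_def be_def .
  have stE: "step al Q s (Dep t i) = (if odd b \<and> snd (prod_decode (b div 2)) < q (fst (prod_decode (b div 2)))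
        \<and> ld sz c Q b < al then
          (let xs = sorted_list_of_set {x\<in>Q. c x = b}; L = mvl sz Q xs (c, q);
               co = last ((c, q) # L) in
           (s\<lparr>cf := fst co, opn := snd co, migs := migs s + length xs, deps := Suc (deps s)\<rparr>,
            c # map fst L))
        else (s\<lparr>deps := Suc (deps s)\<rparr>, [c]))"
    unfolding step_def c_def q_def sz_def b_def Let_def by simp
  have lab_of: "\<And>x. x \<in> P \<Longrightarrow> (\<exists>e. c x = tlab e \<and> sz x \<le> 1 / 2 ^ e \<and> e \<le> ep (rmx s)) \<or>
             (\<exists>k. c x = clab (cls (sz x)) k \<and> k \<le> q (cls (sz x)) \<and> 0 < sz x
                  \<and> cls (sz x) < ep (rmx s))" using iv_lab[OF iv] unfolding c_def q_def sz_def by blast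
  have G: "invar I al s' Q \<and> out \<noteq> [] \<and> hd out = c \<and> last out = cf s' \<and>
    (\<forall>c\<in>set out. \<forall>b. ld (szs s') c Q b \<le> 1) \<and> szs s' = sz \<and>
    adj (\<lambda>a b. \<exists>y v. b = a(y := v)) out \<and>
    migs s' = migs s + (length out - 1) \<and> deps s' = Suc (deps s)"
  proof (cases "odd b \<and> snd (prod_decode (b div 2)) < q (fst (prod_decode (b div 2))) \<and> ld sz c Q b < al")
    case False
    have s': "s' = s\<lparr>deps := Suc (deps s)\<rparr>" and out: "out = [c]" using st False unfolding stE by auto
    have lab: "\<forall>x\<in>Q. (\<exists>e. c x = tlab e \<and> sz x \<le> 1 / 2 ^ e \<and> e \<le> ep (rmx s)) \<or>
             (\<exists>k. c x = clab (cls (sz x)) k \<and> k \<le> q (cls (sz x)) \<and> 0 < sz x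
                  \<and> cls (sz x) < ep (rmx s))" using lab_of QP by blast
    have tc: "\<forall>e. card {x\<in>Q. c x = tlab e} \<le> 2 ^ e"
    proof
      fix e
      have "card {x\<in>Q. c x = tlab e} \<le> card {x\<in>P. c x = tlab e}" using finP QP by (intro card_mono) auto
      then show "card {x\<in>Q. c x = tlab e} \<le> 2 ^ e" using iv_tcard[OF iv] unfolding c_def by (meson le_trans)
    qed
    have cl: "\<forall>j k. k < q j \<longrightarrow> (\<exists>x\<in>Q. c x = clab j k) \<longrightarrow> al \<le> ld sz c Q (clab j k)"
    proof (intro allI impI)
      fix j k assume k: "k < q j" and ne: "\<exists>x\<in>Q. c x = clab j k"
      show "al \<le> ld sz c Q (clab j k)"
      proof (cases "clab j k = b")
        case True
        then show ?thesis using False k by auto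
      next
        case False
        then have "ld sz c Q (clab j k) = ld sz c P (clab j k)" unfolding Q b_def by (intro ld_remove_other) simp
        moreover have "\<exists>x\<in>P. c x = clab j k" using ne QP by auto
        ultimately show ?thesis using iv_closed[OF iv] k unfolding c_def q_def sz_def by simp
      qed
    qed
    have pot: "real (migs s) + Phi be sz c q Q \<le> be * real (Suc (deps s))"
      using PhiQ pot0 by (simp add: algebra_simps)
    have "invar I al s' Q" unfolding invar_def s'
      using finQ iv_sub[OF iv] QP iv_sz[OF iv] lab tc feQ cl iv_opn0[OF iv] iv_rmx[OF iv] pot
      unfolding c_def q_def sz_def be_def by auto
    then show ?thesis using s' out feQ unfolding c_def sz_def by simp
  next
    case True
    define j where "j = fst (prod_decode (b div 2))"
    define k0 where "k0 = snd (prod_decode (b div 2))"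
    have bj: "b = clab j k0" unfolding j_def k0_def using True odd_is_clab by blast
    have k0: "k0 < q j" and Llow: "ld sz c Q b < al" using True unfolding j_def k0_def by auto
    have ci: "c i = clab j k0" using bj unfolding b_def .
    have jE: "j < ep (rmx s)" using iv_clab(4)[OF iv iP] ci unfolding c_def by simp
    define S where "S = {x\<in>Q. c x = b}"
    have finS: "finite S" unfolding S_def using finQ by simp
    define xs where "xs = sorted_list_of_set S"
    have xsS: "set xs = S" "distinct xs" unfolding xs_def using finS by auto
    define L where "L = mvl sz Q xs (c, q)"
    define c2 where "c2 = fst (last ((c, q) # L))"
    define q2 where "q2 = snd (last ((c, q) # L))"
    have s': "s' = s\<lparr>cf := c2, opn := q2, migs := migs s + length xs, deps := Suc (deps s)\<rparr>"
      and out: "out = c # map fst L"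
      using st True unfolding stE Let_def xs_def S_def L_def c2_def q2_def by auto
    have Sx: "\<And>x. x \<in> S \<Longrightarrow> x \<in> Q \<and> x \<in> P \<and> c x = clab j k0" unfolding S_def using QP bj by auto
    have h3: "\<forall>x\<in>set xs. 0 < sz x \<and> sz x \<le> 1 \<and> cls (sz x) = j"
    proof
      fix x assume "x \<in> set xs"
      then have x: "x \<in> P" "c x = clab j k0" using Sx xsS by auto
      then show "0 < sz x \<and> sz x \<le> 1 \<and> cls (sz x) = j"
        using iv_clab[OF iv x(1)] iv_szb[OF iv wf x(1)] unfolding c_def sz_def by auto
    qed
    have h4: "\<forall>x\<in>set xs. \<forall>k. q j \<le> k \<longrightarrow> c x \<noteq> clab j k" using Sx xsS k0 by auto
    have h6: "\<forall>x\<in>Q. \<forall>j' k'. c x = clab j' k' \<longrightarrow> k' \<le> q j'"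
      using iv_clab(3)[OF iv] QP unfolding c_def q_def by blast
    have h7: "\<forall>x\<in>Q. \<forall>j' k'. c x = clab j' k' \<longrightarrow> 1 / 2 ^ Suc j' < sz x"
      using iv_clab_bounds(1)[OF iv wf] QP unfolding c_def sz_def by blast
    have MV: "let L = mvl sz Q xs (c, q); c' = fst (last ((c, q) # L)); q' = snd (last ((c, q) # L)) in
     (\<forall>co\<in>set L. \<forall>b. ld sz (fst co) Q b \<le> 1) \<and>
     adj (\<lambda>a b. \<exists>y v. b = a(y := v)) (c # map fst L) \<and>
     (\<forall>i. i \<notin> set xs \<longrightarrow> c' i = c i) \<and>
     (\<forall>x\<in>set xs. \<exists>k. c' x = clab j k \<and> q j \<le> k \<and> k \<le> q' j) \<and>
     (\<forall>j'. j' \<noteq> j \<longrightarrow> q' j' = q j') \<and> q j \<le> q' j \<and>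
     (\<forall>k. q j \<le> k \<longrightarrow> k < q' j \<longrightarrow> 1/2 \<le> ld sz c' Q (clab j k)) \<and>
     (\<forall>b. ld sz c' Q b \<le> 1) \<and>
     (\<forall>i\<in>Q. \<forall>j' k'. c' i = clab j' k' \<longrightarrow> k' \<le> q' j') \<and>
     (\<forall>i\<in>Q. \<forall>j' k'. c' i = clab j' k' \<longrightarrow> 1 / 2 ^ Suc j' < sz i) \<and>
     length L = length xs"
      by (rule mvl_props[OF finQ nnQ xsS(2) _ h3 h4 feQ h6 h7]) (use xsS S_def in auto)
    have R1: "\<forall>co\<in>set L. \<forall>b. ld sz (fst co) Q b \<le> 1"
      and R2: "adj (\<lambda>a b. \<exists>y v. b = a(y := v)) (c # map fst L)"
      and R3: "\<forall>i. i \<notin> set xs \<longrightarrow> c2 i = c i"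
      and R4: "\<forall>x\<in>set xs. \<exists>k. c2 x = clab j k \<and> q j \<le> k \<and> k \<le> q2 j"
      and R5: "\<forall>j'. j' \<noteq> j \<longrightarrow> q2 j' = q j'" "q j \<le> q2 j"
      and R6: "\<forall>k. q j \<le> k \<longrightarrow> k < q2 j \<longrightarrow> 1/2 \<le> ld sz c2 Q (clab j k)"
      and R7: "\<forall>b. ld sz c2 Q b \<le> 1"
      and R10: "length L = length xs"
      using MV unfolding Let_def L_def[symmetric] c2_def[symmetric] q2_def[symmetric] by auto
    have qle: "\<forall>j'. q j' \<le> q2 j'" using R5 by (metis order_refl)
    have SB: "\<And>j' k' x. k' < q j' \<Longrightarrow> clab j' k' \<noteq> b \<Longrightarrow> x \<in> Q \<Longrightarrow> (c2 x = clab j' k') = (c x = clab j' k')"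
    proof -
      fix j' k' x assume a: "k' < q j'" "clab j' k' \<noteq> b" "x \<in> Q"
      show "(c2 x = clab j' k') = (c x = clab j' k')"
      proof (cases "x \<in> set xs")
        case False then show ?thesis using R3 by simp
      next
        case True
        then have "c x = b" using Sx xsS bj by auto
        moreover obtain k'' where "c2 x = clab j k''" "q j \<le> k''" using R4 True by blast
        ultimately show ?thesis using a by auto
      qed
    qed
    have empty0: "\<forall>x\<in>Q. c2 x \<noteq> clab j k0"
    proof
      fix x assume x: "x \<in> Q"
      show "c2 x \<noteq> clab j k0"
      proof (cases "x \<in> set xs")
        case True
        then obtain k'' where "c2 x = clab j k''" "q j \<le> k''" using R4 by blast
        then show ?thesis using k0 by auto
      next
        case False
        then have "c x \<noteq> b" using x xsS S_def by auto
        then show ?thesis using R3 False bj by simp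
      qed
    qed
    have lab: "\<forall>x\<in>Q. (\<exists>e. c2 x = tlab e \<and> sz x \<le> 1 / 2 ^ e \<and> e \<le> ep (rmx s)) \<or>
             (\<exists>k. c2 x = clab (cls (sz x)) k \<and> k \<le> q2 (cls (sz x)) \<and> 0 < sz x
                  \<and> cls (sz x) < ep (rmx s))"
    proof
      fix x assume x: "x \<in> Q"
      show "(\<exists>e. c2 x = tlab e \<and> sz x \<le> 1 / 2 ^ e \<and> e \<le> ep (rmx s)) \<or>
             (\<exists>k. c2 x = clab (cls (sz x)) k \<and> k \<le> q2 (cls (sz x)) \<and> 0 < sz x
                  \<and> cls (sz x) < ep (rmx s))"
      proof (cases "x \<in> set xs")
        case True
        then show ?thesis using R4 h3 jE by force
      next
        case False
        have xP: "x \<in> P" using x QP by auto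
        have c2x: "c2 x = c x" using R3 False by simp
        show ?thesis using lab_of[OF xP]
        proof
          assume "\<exists>e. c x = tlab e \<and> sz x \<le> 1 / 2 ^ e \<and> e \<le> ep (rmx s)"
          then show ?thesis using c2x by auto
        next
          assume "\<exists>k. c x = clab (cls (sz x)) k \<and> k \<le> q (cls (sz x)) \<and> 0 < sz x \<and> cls (sz x) < ep (rmx s)"
          then obtain k where "c x = clab (cls (sz x)) k" "k \<le> q (cls (sz x))" "0 < sz x" "cls (sz x) < ep (rmx s)" by blast
          then show ?thesis using c2x qle[rule_format, of "cls (sz x)"] by (intro disjI2 exI[of _ k]) auto
        qed
      qed
    qed
    have tc: "\<forall>e. card {x\<in>Q. c2 x = tlab e} \<le> 2 ^ e"
    proof
      fix e
      have "{x\<in>Q. c2 x = tlab e} \<subseteq> {x\<in>P. c x = tlab e}"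
      proof
        fix x assume x: "x \<in> {x\<in>Q. c2 x = tlab e}"
        then have "x \<notin> set xs" using R4 by force
        then show "x \<in> {x\<in>P. c x = tlab e}" using x R3 QP by auto
      qed
      then have "card {x\<in>Q. c2 x = tlab e} \<le> card {x\<in>P. c x = tlab e}" using finP by (intro card_mono) auto
      then show "card {x\<in>Q. c2 x = tlab e} \<le> 2 ^ e" using iv_tcard[OF iv] unfolding c_def by (meson le_trans)
    qed
    have cl: "\<forall>j' k'. k' < q2 j' \<longrightarrow> (\<exists>x\<in>Q. c2 x = clab j' k') \<longrightarrow> al \<le> ld sz c2 Q (clab j' k')"
    proof (intro allI impI)
      fix j' k' assume k': "k' < q2 j'" and ne: "\<exists>x\<in>Q. c2 x = clab j' k'"
      show "al \<le> ld sz c2 Q (clab j' k')"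
      proof (cases "j' = j \<and> q j \<le> k'")
        case True then show ?thesis using R6 k' al by force
      next
        case False
        then have kq: "k' < q j'" using k' R5 by (cases "j' = j") auto
        have neb: "clab j' k' \<noteq> b" using ne empty0 bj by auto
        have "ld sz c2 Q (clab j' k') = ld sz c Q (clab j' k')"
          by (rule ld_cong) (use SB[OF kq neb] in auto)
        also have "\<dots> = ld sz c P (clab j' k')" unfolding Q using neb b_def by (intro ld_remove_other) simp
        finally have e: "ld sz c2 Q (clab j' k') = ld sz c P (clab j' k')" .
        have "\<exists>x\<in>P. c x = clab j' k'" using ne SB[OF kq neb] QP by blast
        then show ?thesis using e iv_closed[OF iv] kq unfolding c_def q_def sz_def by simp
      qed
    qed
    have o0: "\<forall>j'. ep (rmx s) \<le> j' \<longrightarrow> q2 j' = 0"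
      using iv_opn0[OF iv] R5 jE unfolding q_def by (metis not_le)
    define a where "a = (j, k0)"
    define A where "A = {(j', k'). k' < q j'}"
    define N where "N = {(j', k'). j' = j \<and> q j \<le> k' \<and> k' < q2 j'}"
    have idx2: "{(j', k'). k' < q2 j'} = A \<union> N"
    proof (intro set_eqI iffI)
      fix x assume "x \<in> {(j', k'). k' < q2 j'}"
      then obtain j' k' where x: "x = (j', k')" "k' < q2 j'" by auto
      show "x \<in> A \<union> N"
      proof (cases "j' = j")
        case True then show ?thesis using x unfolding A_def N_def by (cases "k' < q j") auto
      next
        case False then show ?thesis using x R5(1) unfolding A_def N_def by auto
      qed
    next
      fix x assume x: "x \<in> A \<union> N"
      obtain j' k' where xx: "x = (j', k')" by (cases x)
      have "k' < q2 j'"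
      proof (cases "x \<in> A")
        case True then show ?thesis using qle xx unfolding A_def by (metis case_prod_conv mem_Collect_eq less_le_trans)
      next
        case False then have "x \<in> N" using x by simp
        then show ?thesis using xx unfolding N_def by auto
      qed
      then show "x \<in> {(j', k'). k' < q2 j'}" using xx by simp
    qed
    have disj: "A \<inter> N = {}" unfolding A_def N_def by auto
    have finA: "finite A" using fidx unfolding A_def .
    have finN: "finite N"
    proof -
      have "N \<subseteq> {j} \<times> {..<q2 j}" unfolding N_def by auto
      then show ?thesis by (rule finite_subset) auto
    qed
    have aA: "a \<in> A" unfolding a_def A_def using k0 by simp
    have psiN: "\<forall>jk\<in>N. psi be sz c2 Q (fst jk) (snd jk) = 0"
      using R6 unfolding N_def by (auto intro!: psi_zero_half)
    have psia: "psi be sz c2 Q j k0 = 0" using empty0 unfolding psi_def by auto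
    have psiA: "\<forall>jk\<in>A - {a}. psi be sz c2 Q (fst jk) (snd jk) = psi be sz c Q (fst jk) (snd jk)"
    proof
      fix jk assume jk: "jk \<in> A - {a}"
      then have kq: "snd jk < q (fst jk)" unfolding A_def by auto
      have neb: "clab (fst jk) (snd jk) \<noteq> b" using jk bj unfolding a_def by (cases jk) auto
      show "psi be sz c2 Q (fst jk) (snd jk) = psi be sz c Q (fst jk) (snd jk)"
      proof (rule psi_cong)
        show "(\<exists>x\<in>Q. c2 x = clab (fst jk) (snd jk)) = (\<exists>x\<in>Q. c x = clab (fst jk) (snd jk))"
          using SB[OF kq neb] by blast
        show "ld sz c2 Q (clab (fst jk) (snd jk)) = ld sz c Q (clab (fst jk) (snd jk))"
          by (rule ld_cong) (use SB[OF kq neb] in auto)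
      qed
    qed
    have Phi2: "Phi be sz c2 q2 Q = Phi be sz c q Q - psi be sz c Q j k0"
    proof -
      have "Phi be sz c2 q2 Q = (\<Sum>jk\<in>A. psi be sz c2 Q (fst jk) (snd jk)) + (\<Sum>jk\<in>N. psi be sz c2 Q (fst jk) (snd jk))"
        unfolding Phi_def idx2 using finA finN disj by (rule sum.union_disjoint)
      also have "(\<Sum>jk\<in>N. psi be sz c2 Q (fst jk) (snd jk)) = 0" using psiN by simp
      also have "(\<Sum>jk\<in>A. psi be sz c2 Q (fst jk) (snd jk)) = psi be sz c2 Q j k0 + (\<Sum>jk\<in>A - {a}. psi be sz c2 Q (fst jk) (snd jk))"
        using finA aA unfolding a_def by (simp add: sum.remove)
      also have "(\<Sum>jk\<in>A - {a}. psi be sz c2 Q (fst jk) (snd jk)) = (\<Sum>jk\<in>A - {a}. psi be sz c Q (fst jk) (snd jk))"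
        using psiA by (intro sum.cong) auto 
      also have "\<dots> = Phi be sz c q Q - psi be sz c Q j k0"
        unfolding Phi_def A_def[symmetric] using finA aA unfolding a_def by (simp add: sum.remove)
      finally show ?thesis using psia by simp
    qed
    have mle: "real (length xs) \<le> psi be sz c Q j k0"
    proof (cases "S = {}")
      case True
      then have "length xs = 0" using xsS by simp
      then show ?thesis using psi_nonneg bep by simp
    next
      case False
      then obtain y where y: "y \<in> S" by blast
      have ps: "psi be sz c Q j k0 = be * max 0 ((1/2 - ld sz c Q b) * 2 ^ j)"
        unfolding psi_def using y Sx bj by auto
      have lx: "length xs = card S" using xsS distinct_card by metis
      have "real (card S) * (1 / 2 ^ Suc j) \<le> ld sz c Q b"
        unfolding ld_def S_def[symmetric]
      proof (rule sum_bounded_below)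
        fix x assume "x \<in> S"
        then have "1 / 2 ^ Suc j < sz x" using h3 xsS Sx by (metis cls_lower)
        then show "1 / 2 ^ Suc j \<le> sz x" by simp
      qed
      then have "real (card S) \<le> ld sz c Q b * 2 ^ Suc j" by (simp add: field_simps)
      also have "\<dots> \<le> 2 * al * 2 ^ j" using Llow by simp
      also have "\<dots> = be * (1/2 - al) * 2 ^ j" using bet_id[OF al(2)] unfolding be_def by simp
      also have "\<dots> \<le> be * (1/2 - ld sz c Q b) * 2 ^ j" using Llow bep by (intro mult_right_mono mult_left_mono) auto
      also have "\<dots> \<le> be * max 0 ((1/2 - ld sz c Q b) * 2 ^ j)" using bep by (simp add: mult.assoc)
      finally show ?thesis using ps lx by simp
    qed
    have pot: "real (migs s + length xs) + Phi be sz c2 q2 Q \<le> be * real (Suc (deps s))"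
      using Phi2 mle PhiQ pot0 by (simp add: algebra_simps)
    have "invar I al s' Q" unfolding invar_def s'
      using finQ iv_sub[OF iv] QP iv_sz[OF iv] lab tc R7 cl o0 iv_rmx[OF iv] pot
      unfolding c_def q_def sz_def be_def by auto
    moreover have "last out = c2" unfolding out c2_def by (cases L) (auto simp: last_map)
    moreover have "\<forall>c'\<in>set out. \<forall>b. ld sz c' Q b \<le> 1" using out R1 feQ by auto
    ultimately show ?thesis using s' out R2 R10 unfolding sz_def by simp
  qed
  then show "invar I al s' Q" "out \<noteq> []" "hd out = cf s" "last out = cf s'"
    "\<forall>c\<in>set out. \<forall>b. ld (szs s') c Q b \<le> 1" "szs s' = szs s"
    "adj (\<lambda>a b. \<exists>y v. b = a(y := v)) out"
    "migs s' = migs s + (length out - 1)" "deps s' = Suc (deps s)" unfolding c_def sz_def by auto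
qed

definition msum :: "('a \<Rightarrow> 'a \<Rightarrow> nat) \<Rightarrow> 'a list \<Rightarrow> nat" where
  "msum f xs = (\<Sum>j<length xs - 1. f (xs!j) (xs!Suc j))"

lemma msum_Nil[simp]: "msum f [] = 0" and msum_single[simp]: "msum f [x] = 0"
  unfolding msum_def by auto

lemma msum_Cons2[simp]: "msum f (x # y # zs) = f x y + msum f (y # zs)"
  unfolding msum_def by (simp add: sum.lessThan_Suc_shift del: sum.lessThan_Suc)

lemma msum_append: "xs \<noteq> [] \<Longrightarrow> ys \<noteq> [] \<Longrightarrow>
   msum f (xs @ ys) = msum f xs + msum f ys + f (last xs) (hd ys)"
proof (induction xs rule: induct_list012)
  case 1 then show ?case by simp
next
  case (2 x) then show ?case by (cases ys) auto
next
  case (3 x y zs) then show ?case by auto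
qed

lemma msum_le: "adj (\<lambda>a b. f a b \<le> 1) xs \<Longrightarrow> msum f xs \<le> length xs - 1"
proof (induction xs rule: induct_list012)
  case 1 then show ?case by simp
next
  case (2 x) then show ?case by simp
next
  case (3 x y zs) then show ?case by auto
qed

lemma adj_mono: "adj R xs \<Longrightarrow> (\<And>a b. R a b \<Longrightarrow> R' a b) \<Longrightarrow> adj R' xs"
  unfolding adj_def by auto

lemma adj_map: "adj (\<lambda>a b. R (f a) (f b)) xs \<Longrightarrow> adj R (map f xs)"
  unfolding adj_def by auto

definition blk :: "(nat \<Rightarrow> 'a list) \<Rightarrow> nat \<Rightarrow> (nat \<times> 'a) list" where
  "blk B n = concat (map (\<lambda>k. map (\<lambda>c. (k, c)) (B k)) [1..<Suc n])"

lemma blk_0[simp]: "blk B 0 = []" unfolding blk_def by simp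
lemma blk_Suc: "blk B (Suc n) = blk B n @ map (\<lambda>c. (Suc n, c)) (B (Suc n))"
  unfolding blk_def by simp

lemma blk_ne: "(\<forall>k\<in>{1..n}. B k \<noteq> []) \<Longrightarrow> 1 \<le> n \<Longrightarrow> blk B n \<noteq> [] \<and> last (blk B n) = (n, last (B n))"
proof (induction n)
  case 0 then show ?case by simp
next
  case (Suc n)
  have "B (Suc n) \<noteq> []" using Suc.prems by auto
  then show ?case unfolding blk_Suc by (simp add: last_map)
qed

lemma blk_adj:
  assumes ne: "\<forall>k\<in>{1..n}. B k \<noteq> []"
    and inb: "\<forall>k\<in>{1..n}. adj (\<lambda>a b. R (k, a) (k, b)) (B k)"
    and crs: "\<forall>k. 1 \<le> k \<longrightarrow> Suc k \<le> n \<longrightarrow> R (k, last (B k)) (Suc k, hd (B (Suc k)))"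
  shows "adj R (blk B n)"
  using assms
proof (induction n)
  case 0 then show ?case by simp
next
  case (Suc n)
  have IH: "adj R (blk B n)" using Suc by auto
  have bS: "B (Suc n) \<noteq> []" using Suc.prems by auto
  have aS: "adj R (map (\<lambda>c. (Suc n, c)) (B (Suc n)))"
    using Suc.prems(2) by (intro adj_map) auto
  show ?case
  proof (cases "n = 0")
    case True then show ?thesis using aS unfolding blk_Suc by simp
  next
    case False
    then have bn: "blk B n \<noteq> [] \<and> last (blk B n) = (n, last (B n))"
      using blk_ne[of n B] Suc.prems(1) by auto
    have "R (n, last (B n)) (Suc n, hd (B (Suc n)))" using Suc.prems(3) False by auto
    then show ?thesis unfolding blk_Suc using adj_append[of "blk B n" "map (\<lambda>c. (Suc n, c)) (B (Suc n))" R]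
      bn bS IH aS by (simp add: hd_map)
  qed
qed

lemma blk_msum:
  assumes ne: "\<forall>k\<in>{1..n}. B k \<noteq> []"
    and inb: "\<forall>k\<in>{1..n}. adj (\<lambda>a b. f (k, a) (k, b) \<le> 1) (B k)"
    and crs: "\<forall>k. 1 \<le> k \<longrightarrow> Suc k \<le> n \<longrightarrow> f (k, last (B k)) (Suc k, hd (B (Suc k))) = 0"
  shows "msum f (blk B n) \<le> (\<Sum>k\<in>{1..n}. length (B k) - 1)"
  using assms
proof (induction n)
  case 0 then show ?case by simp
next
  case (Suc n)
  have IH: "msum f (blk B n) \<le> (\<Sum>k\<in>{1..n}. length (B k) - 1)" using Suc by auto
  have bS: "B (Suc n) \<noteq> []" using Suc.prems by auto
  have aS: "adj (\<lambda>a b. f a b \<le> 1) (map (\<lambda>c. (Suc n, c)) (B (Suc n)))"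
    using Suc.prems(2) by (intro adj_map) auto
  have mS: "msum f (map (\<lambda>c. (Suc n, c)) (B (Suc n))) \<le> length (B (Suc n)) - 1"
    using msum_le[OF aS] by simp
  show ?case
  proof (cases "n = 0")
    case True then show ?thesis using mS unfolding blk_Suc by simp
  next
    case False
    then have bn: "blk B n \<noteq> [] \<and> last (blk B n) = (n, last (B n))"
      using blk_ne[of n B] Suc.prems(1) by auto
    have z: "f (n, last (B n)) (Suc n, hd (B (Suc n))) = 0" using Suc.prems(3) False by auto
    have "msum f (blk B (Suc n)) = msum f (blk B n) + msum f (map (\<lambda>c. (Suc n, c)) (B (Suc n)))"
      unfolding blk_Suc using msum_append[of "blk B n" "map (\<lambda>c. (Suc n, c)) (B (Suc n))" f] bn bS z
      by (simp add: hd_map)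
    also have "\<dots> \<le> (\<Sum>k\<in>{1..n}. length (B k) - 1) + (length (B (Suc n)) - 1)" using IH mS by simp
    also have "\<dots> = (\<Sum>k\<in>{1..Suc n}. length (B k) - 1)" by simp
    finally show ?thesis .
  qed
qed

lemma set_blk: "x \<in> set (blk B n) \<Longrightarrow> fst x \<in> {1..n} \<and> snd x \<in> set (B (fst x))"
  unfolding blk_def by auto

definition SS :: "real \<Rightarrow> item list \<Rightarrow> nat \<Rightarrow> st" where
  "SS al I k = runr al (rev (take k (events I)))"
definition BB :: "real \<Rightarrow> item list \<Rightarrow> nat \<Rightarrow> (nat \<Rightarrow> nat) list" where
  "BB al I k = alg al (take k (events I))"

lemma SB_Suc: assumes "k < length (events I)"
  shows "SS al I (Suc k) = fst (step al (present (take (Suc k) (events I))) (SS al I k) (events I ! k))"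
    "BB al I (Suc k) = snd (step al (present (take (Suc k) (events I))) (SS al I k) (events I ! k))"
proof -
  have r: "rev (take (Suc k) (events I)) = events I ! k # rev (take k (events I))"
    using assms by (simp add: take_Suc_nth)
  have r2: "rev (events I ! k # rev (take k (events I))) = take (Suc k) (events I)"
    using r by (metis rev_rev_ident)
  show "SS al I (Suc k) = fst (step al (present (take (Suc k) (events I))) (SS al I k) (events I ! k))"
    unfolding SS_def r using r2 by simp
  show "BB al I (Suc k) = snd (step al (present (take (Suc k) (events I))) (SS al I k) (events I ! k))"
    unfolding BB_def alg_def SS_def r by simp
qed

lemma SS_0: "SS al I 0 = st0" unfolding SS_def by simp

lemma feas_ld: "(\<forall>i\<in>P. sz i = isize (I!i)) \<Longrightarrow> (\<forall>b. ld sz c P b \<le> 1) \<Longrightarrow> feasible I P c"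
  unfolding feasible_def ld_def by (metis (no_types, lifting) mem_Collect_eq sum.cong)

lemma card_present_at_le: "card (present_at I t) \<le> length I"
proof -
  have "present_at I t \<subseteq> {..<length I}" unfolding present_at_def by auto
  then show ?thesis by (metis card_lessThan card_mono finite_lessThan)
qed

lemma card_le_rho: "card (present_at I t) \<le> rho I"
proof -
  have "range (\<lambda>t. card (present_at I t)) \<subseteq> {..length I}" using card_present_at_le by auto
  then have "finite (range (\<lambda>t. card (present_at I t)))" by (rule finite_subset) auto
  then show ?thesis unfolding rho_def by (rule Max_ge) auto
qed

lemma invar_0: "invar I al st0 {}"
  unfolding invar_def st0_def Phi_def by (simp add: ep_def ld_def)

lemma blk_step:
  assumes wf: "well_formed I" and al: "0 < al" "al < 1/2" and k: "k < length (events I)"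
    and iv: "invar I al (SS al I k) (present (take k (events I)))"
  defines "P \<equiv> present (take k (events I))" and "Q \<equiv> present (take (Suc k) (events I))"
  shows "invar I al (SS al I (Suc k)) Q \<and> BB al I (Suc k) \<noteq> [] \<and>
     last (BB al I (Suc k)) = cf (SS al I (Suc k)) \<and>
     (\<forall>x\<in>P \<inter> Q. hd (BB al I (Suc k)) x = cf (SS al I k) x) \<and>
     (\<forall>c\<in>set (BB al I (Suc k)). feasible I Q c) \<and>
     adj (\<lambda>a b. \<exists>y v. b = a(y := v)) (BB al I (Suc k)) \<and>
     migs (SS al I (Suc k)) = migs (SS al I k) + (length (BB al I (Suc k)) - 1) \<and>
     deps (SS al I (Suc k)) = deps (SS al I k) + (if \<exists>t i. events I ! k = Dep t i then 1 else 0)"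
proof -
  define s where "s = SS al I k"
  obtain s' out where so: "step al Q s (events I ! k) = (s', out)" by (cases "step al Q s (events I ! k)")
  have s'e: "SS al I (Suc k) = s'" "BB al I (Suc k) = out"
    using SB_Suc[OF k, of al] so unfolding Q_def s_def by auto
  show ?thesis
  proof (cases "events I ! k")
    case (Arr t i z)
    note a = arr_step[OF wf k Arr]
    have ivs: "invar I al s P" using iv unfolding s_def P_def .
    have QQ: "Q = insert i P" using a(5) unfolding P_def Q_def .
    have cq: "card Q \<le> rho I"
    proof -
      have "finite (present_at I t)" unfolding present_at_def by auto
      then have "card Q \<le> card (present_at I t)" using a(6) unfolding Q_def by (rule card_mono)
      then show ?thesis using card_le_rho[of I t] by simp
    qed
    have so': "step al Q s (Arr t i z) = (s', out)" using so Arr by simp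
    note r = step_arr[OF wf al ivs a(4)[folded P_def] QQ a(1) a(3) cq so']
    have "\<forall>c\<in>set out. feasible I Q c"
      using r(1,2) feas_ld[of Q "szs s'" I] unfolding invar_def by auto
    moreover have "\<forall>x\<in>P \<inter> Q. hd out x = cf s x" using r(2,3) by simp
    ultimately show ?thesis unfolding s'e using r Arr unfolding s_def by simp
  next
    case (Dep t i)
    note d = dep_step[OF wf k Dep]
    have ivs: "invar I al s P" using iv unfolding s_def P_def .
    have QQ: "Q = P - {i}" using d(3) unfolding P_def Q_def .
    have so': "step al Q s (Dep t i) = (s', out)" using so Dep by simp
    note r = step_dep[OF wf al ivs d(2)[folded P_def] QQ so']
    have "\<forall>c\<in>set out. feasible I Q c"
    proof
      fix c assume "c \<in> set out"
      then show "feasible I Q c" using r(1,5,6) feas_ld[of Q "szs s" I c] iv_sz[OF ivs] QQ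
        unfolding invar_def by auto
    qed
    moreover have "\<forall>x\<in>P \<inter> Q. hd out x = cf s x" using r(3) by simp
    ultimately show ?thesis unfolding s'e using r Dep unfolding s_def by simp
  qed
qed

lemma run_inv:
  assumes wf: "well_formed I" and al: "0 < al" "al < 1/2"
  shows "k \<le> length (events I) \<Longrightarrow> invar I al (SS al I k) (present (take k (events I))) \<and>
    deps (SS al I k) = length (filter (\<lambda>e. \<exists>t i. e = Dep t i) (take k (events I))) \<and>
    migs (SS al I k) = (\<Sum>k'\<in>{1..k}. length (BB al I k') - 1)"
proof (induction k)
  case 0 then show ?case using invar_0 by (simp add: SS_0 st0_def present_def)
next
  case (Suc k)
  then have k: "k < length (events I)" by simp
  have IH: "invar I al (SS al I k) (present (take k (events I)))"
    "deps (SS al I k) = length (filter (\<lambda>e. \<exists>t i. e = Dep t i) (take k (events I)))"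
    "migs (SS al I k) = (\<Sum>k'\<in>{1..k}. length (BB al I k') - 1)" using Suc by auto
  note b = blk_step[OF wf al k IH(1)]
  have "filter (\<lambda>e. \<exists>t i. e = Dep t i) (take (Suc k) (events I)) =
        filter (\<lambda>e. \<exists>t i. e = Dep t i) (take k (events I)) @ filter (\<lambda>e. \<exists>t i. e = Dep t i) [events I ! k]"
    using k by (simp add: take_Suc_nth)
  then have "length (filter (\<lambda>e. \<exists>t i. e = Dep t i) (take (Suc k) (events I))) =
     length (filter (\<lambda>e. \<exists>t i. e = Dep t i) (take k (events I))) + (if \<exists>t i. events I ! k = Dep t i then 1 else 0)"
    by simp
  then show ?case using b IH by simp
qed

lemma ln2_ge: "1/2 \<le> ln (2::real)"
proof -
  have "ln (1/2::real) \<le> 1/2 - 1" by (rule ln_le_minus_one) simp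
  moreover have "ln (1/2::real) = - ln 2" by (simp add: ln_div)
  ultimately show ?thesis by simp
qed

lemma ep_ln: assumes "r \<le> rh" shows "real (2 * ep r + 1) \<le> 10 * max 1 (ln (real rh))"
proof (cases "ep r")
  case 0 then show ?thesis by simp
next
  case (Suc m)
  then have "2 ^ m < r" by (rule ep_Suc)
  then have rr: "(2::real) ^ m < real rh" using assms by (metis of_nat_less_iff of_nat_numeral of_nat_power order_less_le_trans of_nat_le_iff)
  have pos: "0 < (2::real) ^ m" by simp
  have "real m * ln 2 = ln ((2::real) ^ m)" by (simp add: ln_realpow)
  also have "\<dots> < ln (real rh)" using rr pos by (simp add: ln_less_cancel_iff)
  finally have "real m * ln 2 < ln (real rh)" .
  moreover have "real m * (1/2) \<le> real m * ln 2" using ln2_ge by (intro mult_left_mono) auto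
  ultimately have "real m \<le> 2 * ln (real rh)" by simp
  then show ?thesis using Suc by simp
qed

lemma bins_bound:
  assumes iv: "invar I al s P" and wf: "well_formed I" and al: "0 < al"
  shows "real (card (cf s ` P)) \<le> (\<Sum>i\<in>P. szs s i) / al + real (2 * ep (rmx s) + 1)"
proof -
  define Y where "Y = cf s ` P"
  define E where "E = ep (rmx s)"
  have finP: "finite P" using iv_fin[OF iv] .
  have finY: "finite Y" unfolding Y_def using finP by simp
  define Yc where "Yc = {b\<in>Y. \<exists>j k. b = clab j k \<and> k < opn s j}"
  define Yo where "Yo = Y - Yc"
  have YY: "Y = Yc \<union> Yo" unfolding Yo_def Yc_def by auto
  have finYc: "finite Yc" unfolding Yc_def using finY by simp
  have "Yo \<subseteq> tlab ` {..E} \<union> (\<lambda>j. clab j (opn s j)) ` {..<E}"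
  proof
    fix b assume b: "b \<in> Yo"
    then obtain i where i: "i \<in> P" "cf s i = b" unfolding Yo_def Y_def by auto
    show "b \<in> tlab ` {..E} \<union> (\<lambda>j. clab j (opn s j)) ` {..<E}"
      using iv_lab[OF iv i(1)]
    proof
      assume "\<exists>e. cf s i = tlab e \<and> szs s i \<le> 1 / 2 ^ e \<and> e \<le> ep (rmx s)"
      then show ?thesis using i unfolding E_def by auto
    next
      assume "\<exists>k. cf s i = clab (cls (szs s i)) k \<and> k \<le> opn s (cls (szs s i)) \<and> 0 < szs s i
                  \<and> cls (szs s i) < ep (rmx s)"
      then obtain k where k: "cf s i = clab (cls (szs s i)) k" "k \<le> opn s (cls (szs s i))"
        "cls (szs s i) < E" unfolding E_def by blast
      have "\<not> k < opn s (cls (szs s i))" using b k(1) i unfolding Yo_def Yc_def by auto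
      then have "k = opn s (cls (szs s i))" using k(2) by simp
      then show ?thesis using k(1,3) i by auto
    qed
  qed
  then have "card Yo \<le> card (tlab ` {..E} \<union> (\<lambda>j. clab j (opn s j)) ` {..<E})" by (intro card_mono) auto
  also have "\<dots> \<le> card (tlab ` {..E}) + card ((\<lambda>j. clab j (opn s j)) ` {..<E})" by (rule card_Un_le)
  also have "\<dots> \<le> card {..E} + card {..<E}" by (intro add_mono card_image_le) auto
  finally have cYo: "card Yo \<le> 2 * E + 1" by simp
  have nn: "\<And>i. i \<in> P \<Longrightarrow> 0 \<le> szs s i" using iv_szb[OF iv wf] by auto
  have "real (card Yc) * al \<le> (\<Sum>b\<in>Yc. ld (szs s) (cf s) P b)"
  proof (rule sum_bounded_below)
    fix b assume "b \<in> Yc"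
    then obtain j k i where "b = clab j k" "k < opn s j" "i \<in> P" "cf s i = b" unfolding Yc_def Y_def by auto
    then show "al \<le> ld (szs s) (cf s) P b" using iv_closed[OF iv] by auto
  qed
  also have "\<dots> \<le> (\<Sum>b\<in>Y. ld (szs s) (cf s) P b)"
    using finY YY nn by (intro sum_mono2) (auto intro: ld_nonneg)
  also have "\<dots> = (\<Sum>i\<in>P. szs s i)" unfolding ld_def Y_def using finP by (intro sum.group) auto
  finally have "real (card Yc) * al \<le> (\<Sum>i\<in>P. szs s i)" .
  then have cYc: "real (card Yc) \<le> (\<Sum>i\<in>P. szs s i) / al" using al by (simp add: field_simps)
  have "card Y \<le> card Yc + card Yo" unfolding YY by (rule card_Un_le)
  then have "real (card Y) \<le> real (card Yc) + real (card Yo)" by linarith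
  then show ?thesis using cYc cYo unfolding Y_def E_def by linarith
qed

lemma opt_ge:
  assumes wf: "well_formed I" and P: "P \<subseteq> {..<length I}"
  shows "(\<Sum>i\<in>P. isize (I!i)) \<le> real (opt I P)"
proof -
  have finP: "finite P" using P by (rule finite_subset) auto
  have ex: "\<exists>k c. (\<forall>i\<in>P. c i < k) \<and> feasible I P c"
  proof (intro exI conjI)
    show "\<forall>i\<in>P. id i < length I" using P by auto
    show "feasible I P id" unfolding feasible_def
    proof
      fix b
      show "(\<Sum>i\<in>{i\<in>P. id i = b}. isize (I!i)) \<le> 1"
      proof (cases "b \<in> P")
        case True
        then have "{i\<in>P. id i = b} = {b}" by auto
        then show ?thesis using size_bounds[OF wf] P True by auto
      next
        case False
        then have "{i\<in>P. id i = b} = {}" by auto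
        then show ?thesis by (simp only:) simp
      qed
    qed
  qed
  obtain c where c: "\<forall>i\<in>P. c i < opt I P" "feasible I P c"
    using LeastI_ex[OF ex] unfolding opt_def by blast
  have "(\<Sum>i\<in>P. isize (I!i)) = (\<Sum>b\<in>{..<opt I P}. \<Sum>i\<in>{i\<in>P. c i = b}. isize (I!i))"
    using finP c(1) by (intro sum.group[symmetric]) auto
  also have "\<dots> \<le> (\<Sum>b\<in>{..<opt I P}. 1)"
    using c(2) unfolding feasible_def by (intro sum_mono) auto
  also have "\<dots> = real (opt I P)" by simp
  finally show ?thesis .
qed

lemma trace_blk: "trace (alg al) I = blk (BB al I) (length (events I))"
  unfolding trace_def blk_def BB_def by simp

lemma block_facts:
  assumes wf: "well_formed I" and al: "0 < al" "al < 1/2" and k: "k \<in> {1..length (events I)}"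
  shows "BB al I k \<noteq> [] \<and> last (BB al I k) = cf (SS al I k) \<and>
     (\<forall>x\<in>present (take (k - 1) (events I)) \<inter> present (take k (events I)). hd (BB al I k) x = cf (SS al I (k - 1)) x) \<and>
     (\<forall>c\<in>set (BB al I k). feasible I (present (take k (events I))) c) \<and>
     adj (\<lambda>a b. \<exists>y v. b = a(y := v)) (BB al I k)"
proof -
  obtain k' where k': "k = Suc k'" "k' < length (events I)" using k by (cases k) auto
  have iv: "invar I al (SS al I k') (present (take k' (events I)))" using run_inv[OF wf al, of k'] k' by simp
  show ?thesis using blk_step[OF wf al k'(2) iv] k'(1) by simp
qed

lemma moved_upd: "card (moved I (k, a) (k', a(y := v))) \<le> 1"
proof -
  have "moved I (k, a) (k', a(y := v)) \<subseteq> {y}" unfolding moved_def by auto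
  then have "card (moved I (k, a) (k', a(y := v))) \<le> card {y}" by (intro card_mono) auto
  then show ?thesis by simp
qed

theorem main_result:
  "\<exists>C::real. \<forall>\<alpha>::real. 0 < \<alpha> \<and> \<alpha> < 1/2 \<longrightarrow>
     (\<exists>A::algorithm. \<forall>I. well_formed I \<longrightarrow>
        valid_run A I \<and>
        real (migrations A I) \<le> 4 * \<alpha> / (1 - 2 * \<alpha>) * real (length I) \<and>
        (\<forall>t. real (open_bins_at A I t)
               \<le> real (opt I (present_at I t)) / \<alpha> + C * max 1 (ln (real (rho I)))))"
proof (intro exI[of _ 10] allI impI)
  fix al :: real assume a: "0 < al \<and> al < 1/2"
  then have al: "0 < al" "al < 1/2" by auto
  show "\<exists>A::algorithm. \<forall>I. well_formed I \<longrightarrow>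
        valid_run A I \<and>
        real (migrations A I) \<le> 4 * al / (1 - 2 * al) * real (length I) \<and>
        (\<forall>t. real (open_bins_at A I t)
               \<le> real (opt I (present_at I t)) / al + 10 * max 1 (ln (real (rho I))))"
  proof (intro exI[of _ "alg al"] allI impI, intro conjI)
    fix I assume wf: "well_formed I"
    define N where "N = length (events I)"
    define B where "B = BB al I"
    define R where "R = (\<lambda>x y. if fst x = fst y then card (moved I x y) \<le> 1 else moved I x y = {})"
    note bf = block_facts[OF wf al, folded N_def B_def]
    have ne: "\<forall>k\<in>{1..N}. B k \<noteq> []" using bf by auto
    have inb: "\<forall>k\<in>{1..N}. adj (\<lambda>a b. card (moved I (k, a) (k, b)) \<le> 1) (B k)"
    proof
      fix k assume k: "k \<in> {1..N}"
      have "adj (\<lambda>a b. \<exists>y v. b = a(y := v)) (B k)" using bf[OF k] by blast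
      then show "adj (\<lambda>a b. card (moved I (k, a) (k, b)) \<le> 1) (B k)"
        by (rule adj_mono) (metis moved_upd)
    qed
    have crs0: "\<forall>k. 1 \<le> k \<longrightarrow> Suc k \<le> N \<longrightarrow> moved I (k, last (B k)) (Suc k, hd (B (Suc k))) = {}"
    proof (intro allI impI)
      fix k assume k: "1 \<le> k" "Suc k \<le> N"
      have l: "last (B k) = cf (SS al I k)" using bf[of k] k by simp
      have h: "\<forall>x\<in>present (take k (events I)) \<inter> present (take (Suc k) (events I)). hd (B (Suc k)) x = cf (SS al I k) x"
        using bf[of "Suc k"] k by simp
      show "moved I (k, last (B k)) (Suc k, hd (B (Suc k))) = {}" unfolding moved_def using l h by auto
    qed
    have T: "trace (alg al) I = blk B N" unfolding B_def N_def by (rule trace_blk)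
    have adjR: "adj R (blk B N)"
    proof (rule blk_adj[OF ne])
      show "\<forall>k\<in>{1..N}. adj (\<lambda>a b. R (k, a) (k, b)) (B k)" using inb unfolding R_def by simp
      show "\<forall>k. 1 \<le> k \<longrightarrow> Suc k \<le> N \<longrightarrow> R (k, last (B k)) (Suc k, hd (B (Suc k)))"
        using crs0 unfolding R_def by simp
    qed
    show "valid_run (alg al) I" unfolding valid_run_def
    proof (intro conjI)
      show "\<forall>k\<in>{1..length (events I)}. alg al (take k (events I)) \<noteq> []"
        using ne unfolding B_def BB_def N_def by simp
      show "\<forall>x\<in>set (trace (alg al) I). feasible I (present (take (fst x) (events I))) (snd x)"
        unfolding T using set_blk bf by blast
      show "\<forall>j. Suc j < length (trace (alg al) I) \<longrightarrow>
        (if fst (trace (alg al) I ! j) = fst (trace (alg al) I ! Suc j)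
         then card (moved I (trace (alg al) I ! j) (trace (alg al) I ! Suc j)) \<le> 1
         else moved I (trace (alg al) I ! j) (trace (alg al) I ! Suc j) = {})"
        using adjR unfolding T adj_def R_def by simp
    qed
    have ri: "invar I al (SS al I N) (present (take N (events I))) \<and>
      deps (SS al I N) = length (filter (\<lambda>e. \<exists>t i. e = Dep t i) (take N (events I))) \<and>
      migs (SS al I N) = (\<Sum>k'\<in>{1..N}. length (BB al I k') - 1)" using run_inv[OF wf al, of N] N_def by simp
    have "migrations (alg al) I = msum (\<lambda>x y. card (moved I x y)) (blk B N)"
      unfolding migrations_def msum_def T ..
    also have "\<dots> \<le> (\<Sum>k\<in>{1..N}. length (B k) - 1)"
      by (rule blk_msum[OF ne inb]) (use crs0 in simp)
    also have "\<dots> = migs (SS al I N)" using ri unfolding B_def by simp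
    finally have m1: "real (migrations (alg al) I) \<le> real (migs (SS al I N))" by simp
    have "real (migs (SS al I N)) \<le> bet al * real (deps (SS al I N))"
      using iv_pot[of I al "SS al I N"] ri Phi_nonneg[of "bet al"] bet_pos[OF al]
      by (smt (verit, best))
    moreover have "deps (SS al I N) = length I" using ri dep_count[OF wf] unfolding N_def by simp
    ultimately show "real (migrations (alg al) I) \<le> 4 * al / (1 - 2 * al) * real (length I)"
      using m1 unfolding bet_def by simp
    show "\<forall>t. real (open_bins_at (alg al) I t)
               \<le> real (opt I (present_at I t)) / al + 10 * max 1 (ln (real (rho I)))"
    proof
      fix t
      obtain k where k: "k \<le> N" "hist_at I t = take k (events I)" using hist_take[OF wf] unfolding N_def by blast
      have rhs0: "0 \<le> real (opt I (present_at I t)) / al + 10 * max 1 (ln (real (rho I)))"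
        using al by (intro add_nonneg_nonneg) auto
      show "real (open_bins_at (alg al) I t)
               \<le> real (opt I (present_at I t)) / al + 10 * max 1 (ln (real (rho I)))"
      proof (cases k)
        case 0
        then have "open_bins_at (alg al) I t = 0" unfolding open_bins_at_def k(2) present_def by simp
        then show ?thesis using rhs0 by simp
      next
        case (Suc k')
        define P where "P = present (take k (events I))"
        define s where "s = SS al I k"
        have iv: "invar I al s P" using run_inv[OF wf al, of k] k unfolding N_def s_def P_def by simp
        have l: "last (alg al (take k (events I))) = cf s"
          using bf[of k] k Suc unfolding s_def B_def BB_def by simp
        have ob: "open_bins_at (alg al) I t = card (cf s ` P)"
          unfolding open_bins_at_def k(2) l P_def ..
        have PP: "P \<subseteq> present_at I t" using hist_present[OF wf, of t] k(2) unfolding P_def by simp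
        have finA: "finite (present_at I t)" unfolding present_at_def by auto
        have subA: "present_at I t \<subseteq> {..<length I}" unfolding present_at_def by auto
        have "(\<Sum>i\<in>P. szs s i) = (\<Sum>i\<in>P. isize (I!i))" using iv_sz[OF iv] by simp
        also have "\<dots> \<le> (\<Sum>i\<in>present_at I t. isize (I!i))"
          using PP finA subA size_bounds[OF wf] by (intro sum_mono2) auto
        also have "\<dots> \<le> real (opt I (present_at I t))" using opt_ge[OF wf subA] .
        finally have so: "(\<Sum>i\<in>P. szs s i) / al \<le> real (opt I (present_at I t)) / al"
          using al by (simp add: divide_right_mono)
        have el: "real (2 * ep (rmx s) + 1) \<le> 10 * max 1 (ln (real (rho I)))"
          using ep_ln iv_rmx[OF iv] by blast
        show ?thesis using bins_bound[OF iv wf al(1)] so el ob by linarith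
      qed
    qed
  qed
qed

theorem theorem2:
  "\<exists>C::real. \<forall>\<alpha>::real. 0 < \<alpha> \<and> \<alpha> < 1/2 \<longrightarrow>
     (\<exists>A::algorithm. \<forall>I. well_formed I \<longrightarrow>
        valid_run A I \<and>
        real (migrations A I) \<le> 4 * \<alpha> / (1 - 2 * \<alpha>) * real (length I) \<and>
        (\<forall>t. real (open_bins_at A I t)
               \<le> real (opt I (present_at I t)) / \<alpha> + C * max 1 (ln (real (rho I)))))"
    using main_result .

end
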